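(* Let $B\in\mathscr{S}_d(\mathcal{H},\mathcal{J})$. There exist unique orthogonal decompositions $\mathcal{H}=\mathcal{H}_0\oplus\mathcal{H}'$ and $\mathcal{J}=\mathcal{J}_0\oplus\mathcal{J}'$ such that for every $n$ and $Z\in\mathbb{B}^d_n$, $B(Z)$ maps $\mathcal{H}_0\otimes\mathbb{C}^n$ into $\mathcal{J}_0\otimes\mathbb{C}^n$ and $\mathcal{H}'\otimes\mathbb{C}^n$ into $\mathcal{J}'\otimes\mathbb{C}^n$; the restrictions $B_0(Z):=B(Z)|_{\mathcal{H}_0\otimes\mathbb{C}^n}$ define a purely contractive $B_0\in\mathscr{S}_d(\mathcal{H}_0,\mathcal{J}_0)$; and $B(Z)|_{\mathcal{H}'\otimes\mathbb{C}^n}=B(0_n)|_{\mathcal{H}'\otimes\mathbb{C}^n}$ is a surjective isometry of $\mathcal{H}'\otimes\mathbb{C}^n$ onto $\mathcal{J}'\otimes\mathbb{C}^n$ (a unitary constant).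
   Context: $\mathbb{B}^d_n$: $d$-tuples $Z=(Z_1,\dots,Z_d)$ of complex $n\times n$ matrices with $\|[Z_1\cdots Z_d]\|<1$ as an operator $\mathbb{C}^n\otimes\mathbb{C}^d\to\mathbb{C}^n$; $0_n=(0,\dots,0)\in\mathbb{B}^d_n$. $\mathscr{S}_d(\mathcal{H},\mathcal{J})$: functions $B(Z)=\sum_{\omega}\hat B_\omega\otimes Z^\omega\in\mathscr{B}(\mathcal{H}\otimes\mathbb{C}^n,\mathcal{J}\otimes\mathbb{C}^n)$ ($\omega$ ranging over words in $\{1,\dots,d\}$, $Z^{i_1\cdots i_k}=Z_{i_1}\cdots Z_{i_k}$, $\hat B_\omega\in\mathscr{B}(\mathcal{H},\mathcal{J})$) with $\sup_Z\|B(Z)\|\le1$. $B$ is purely contractive if $\|B(Z)h\|<\|h\|$ for all $Z$ and all $h\ne0$. *)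

theory Defs
  imports "HOL-Analysis.Analysis"
begin

text \<open>A complex Hilbert space is
  modelled as a real Hilbert space (real inner product, complete) with a complex
  scalar multiplication compatible with the real one and with the norm.  By the
  Jordan-von Neumann theorem the norm then comes from the complex inner product
  cinner below (recovered by polarization).\<close>

class chilbert = real_inner + complete_space +
  fixes cscale :: "complex \<Rightarrow> 'a \<Rightarrow> 'a" (infixr \<open>*\<^sub>C\<close> 75)
  assumes cscale_add_right: "a *\<^sub>C (x + y) = a *\<^sub>C x + a *\<^sub>C y"
    and cscale_add_left: "(a + b) *\<^sub>C x = a *\<^sub>C x + b *\<^sub>C x"
    and cscale_cscale: "a *\<^sub>C (b *\<^sub>C x) = (a * b) *\<^sub>C x"
    and cscale_of_real: "complex_of_real r *\<^sub>C x = r *\<^sub>R x"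
    and norm_cscale: "norm (a *\<^sub>C x) = cmod a * norm x"

instantiation complex :: chilbert
begin
definition cscale_complex :: "complex \<Rightarrow> complex \<Rightarrow> complex" where
  "cscale_complex a x = a * x"
instance
  by standard (auto simp: cscale_complex_def algebra_simps norm_mult scaleR_conv_of_real)
end

text \<open>Complex inner product (conjugate linear in the first argument).\<close>
definition cinner :: "'a::chilbert \<Rightarrow> 'a \<Rightarrow> complex" where
  "cinner x y = Complex (inner x y) (inner (\<i> *\<^sub>C x) y)"

definition csubspace :: "'a::chilbert set \<Rightarrow> bool" where
  "csubspace S \<longleftrightarrow> 0 \<in> S \<and> (\<forall>x\<in>S. \<forall>y\<in>S. x + y \<in> S) \<and> (\<forall>a. \<forall>x\<in>S. a *\<^sub>C x \<in> S)"

definition ortho :: "'a::chilbert set \<Rightarrow> 'a set" where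
  "ortho S = {y. \<forall>x\<in>S. cinner x y = 0}"

text \<open>A d-tuple Z = (Z_1,...,Z_d) of n x n complex matrices is a function
  Z k i j (k in {1..d}, i,j < n); other entries are irrelevant.\<close>

definition rownorm :: "nat \<Rightarrow> nat \<Rightarrow> (nat \<Rightarrow> nat \<Rightarrow> nat \<Rightarrow> complex) \<Rightarrow> real" where
  "rownorm d n Z = Sup {sqrt (\<Sum>i<n. (cmod (\<Sum>k\<in>{1..d}. \<Sum>j<n. Z k i j * v k j))\<^sup>2) | v.
      (\<Sum>k\<in>{1..d}. \<Sum>j<n. (cmod (v k j))\<^sup>2) \<le> 1}"

definition rowball :: "nat \<Rightarrow> nat \<Rightarrow> (nat \<Rightarrow> nat \<Rightarrow> nat \<Rightarrow> complex) set" where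
  "rowball d n = {Z. rownorm d n Z < 1}"

definition matmul :: "nat \<Rightarrow> (nat \<Rightarrow> nat \<Rightarrow> complex) \<Rightarrow> (nat \<Rightarrow> nat \<Rightarrow> complex) \<Rightarrow> nat \<Rightarrow> nat \<Rightarrow> complex" where
  "matmul n A B = (\<lambda>i j. \<Sum>l<n. A i l * B l j)"

fun Zpow :: "nat \<Rightarrow> (nat \<Rightarrow> nat \<Rightarrow> nat \<Rightarrow> complex) \<Rightarrow> nat list \<Rightarrow> nat \<Rightarrow> nat \<Rightarrow> complex" where
  "Zpow n Z [] = (\<lambda>i j. if i = j then 1 else 0)"
| "Zpow n Z (k # w) = matmul n (Z k) (Zpow n Z w)"

definition words :: "nat \<Rightarrow> nat \<Rightarrow> nat list set" where
  "words d k = {w. length w = k \<and> set w \<subseteq> {1..d}}"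

text \<open>An element of H \<otimes> C^n is identified with x :: nat \<Rightarrow> H, x = \<Sum>_{i<n} x i \<otimes> e_i,
  with x i = 0 for i \<ge> n.\<close>
definition vecs :: "nat \<Rightarrow> 'a set \<Rightarrow> (nat \<Rightarrow> 'a::zero) set" where
  "vecs n S = {x. (\<forall>i<n. x i \<in> S) \<and> (\<forall>i\<ge>n. x i = 0)}"

definition vnorm :: "nat \<Rightarrow> (nat \<Rightarrow> 'a::real_normed_vector) \<Rightarrow> real" where
  "vnorm n x = sqrt (\<Sum>i<n. (norm (x i))\<^sup>2)"

text \<open>Degree-k homogeneous part of B(Z) applied to x: component i of
  \<Sum>_{|w|=k} (Bhat w \<otimes> Z^w) x, where ((T \<otimes> M) x)_i = \<Sum>_j M_ij T(x_j).\<close>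
definition hterm :: "nat \<Rightarrow> nat \<Rightarrow> (nat list \<Rightarrow> 'h::chilbert \<Rightarrow> 'j::chilbert)
    \<Rightarrow> (nat \<Rightarrow> nat \<Rightarrow> nat \<Rightarrow> complex) \<Rightarrow> (nat \<Rightarrow> 'h) \<Rightarrow> nat \<Rightarrow> nat \<Rightarrow> 'j" where
  "hterm d n Bh Z x k i = (\<Sum>w\<in>words d k. \<Sum>j<n. Zpow n Z w i j *\<^sub>C Bh w (x j))"

definition Beval :: "nat \<Rightarrow> nat \<Rightarrow> (nat list \<Rightarrow> 'h::chilbert \<Rightarrow> 'j::chilbert)
    \<Rightarrow> (nat \<Rightarrow> nat \<Rightarrow> nat \<Rightarrow> complex) \<Rightarrow> (nat \<Rightarrow> 'h) \<Rightarrow> nat \<Rightarrow> 'j" where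
  "Beval d n Bh Z x = (\<lambda>i. if i < n then (\<Sum>k. hterm d n Bh Z x k i) else 0)"

definition schur :: "nat \<Rightarrow> 'h::chilbert set \<Rightarrow> 'j::chilbert set \<Rightarrow> (nat list \<Rightarrow> 'h \<Rightarrow> 'j) \<Rightarrow> bool" where
  "schur d H J Bh \<longleftrightarrow>
     (\<forall>w. set w \<subseteq> {1..d} \<longrightarrow>
        Bh w ` H \<subseteq> J \<and>
        (\<forall>x\<in>H. \<forall>y\<in>H. Bh w (x + y) = Bh w x + Bh w y) \<and>
        (\<forall>a. \<forall>x\<in>H. Bh w (a *\<^sub>C x) = a *\<^sub>C Bh w x) \<and>
        (\<exists>C. \<forall>x\<in>H. norm (Bh w x) \<le> C * norm x)) \<and>
     (\<forall>n>0. \<forall>Z\<in>rowball d n. \<forall>x\<in>vecs n H.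
        (\<forall>i<n. summable (\<lambda>k. hterm d n Bh Z x k i)) \<and>
        vnorm n (Beval d n Bh Z x) \<le> vnorm n x)"

definition purely_contractive :: "nat \<Rightarrow> 'h::chilbert set \<Rightarrow> (nat list \<Rightarrow> 'h \<Rightarrow> 'j::chilbert) \<Rightarrow> bool" where
  "purely_contractive d H Bh \<longleftrightarrow>
     (\<forall>n>0. \<forall>Z\<in>rowball d n. \<forall>x\<in>vecs n H. x \<noteq> (\<lambda>_. 0) \<longrightarrow>
        vnorm n (Beval d n Bh Z x) < vnorm n x)"

end

theory Submission
  imports Defs "HOL-Complex_Analysis.Complex_Analysis"
begin


lemma cscale_zero_left [simp]: "(0::complex) *\<^sub>C x = (0::'a::chilbert)"
  using cscale_of_real[of 0 x] by simp

lemma cscale_one [simp]: "(1::complex) *\<^sub>C x = (x::'a::chilbert)"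
  using cscale_of_real[of 1 x] by simp

lemma cscale_zero_right [simp]: "a *\<^sub>C (0::'a::chilbert) = 0"
  using cscale_add_right[of a 0 0] by simp

lemma cscale_minus_one: "(-1::complex) *\<^sub>C x = - (x::'a::chilbert)"
  using cscale_of_real[of "-1" x] by simp

lemma cscale_minus_right: "a *\<^sub>C (- x) = - (a *\<^sub>C (x::'a::chilbert))"
  by (metis add_eq_0_iff cscale_add_right cscale_zero_right neg_eq_iff_add_eq_0)

lemma cscale_diff_right: "a *\<^sub>C (x - y) = a *\<^sub>C x - a *\<^sub>C (y::'a::chilbert)"
  by (metis cscale_add_right cscale_minus_right diff_conv_add_uminus)

lemma cscale_minus_left: "(- a) *\<^sub>C x = - (a *\<^sub>C (x::'a::chilbert))"
  by (metis add_eq_0_iff cscale_add_left cscale_zero_left neg_eq_iff_add_eq_0)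

lemma cscale_sum_right: "a *\<^sub>C (\<Sum>i\<in>I. f i) = (\<Sum>i\<in>I. a *\<^sub>C (f i::'a::chilbert))"
  by (induction I rule: infinite_finite_induct) (auto simp: cscale_add_right)

lemma cscale_sum_left: "(\<Sum>i\<in>I. f i) *\<^sub>C x = (\<Sum>i\<in>I. f i *\<^sub>C (x::'a::chilbert))"
  by (induction I rule: infinite_finite_induct) (auto simp: cscale_add_left)

lemma cscale_scaleR: "a *\<^sub>C (r *\<^sub>R x) = r *\<^sub>R (a *\<^sub>C (x::'a::chilbert))"
  by (metis cscale_cscale cscale_of_real mult.commute)

lemma bounded_linear_cscale: "bounded_linear (\<lambda>x::'a::chilbert. a *\<^sub>C x)"
  apply (rule bounded_linear_intro[where K="cmod a"])
  by (auto simp: cscale_add_right cscale_scaleR norm_cscale)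

lemma cscale_eq_0_iff: "a *\<^sub>C (x::'a::chilbert) = 0 \<longleftrightarrow> a = 0 \<or> x = 0"
  by (metis mult_eq_0_iff norm_cscale norm_eq_zero)

lemma cscale_cancel: "a \<noteq> 0 \<Longrightarrow> inverse a *\<^sub>C (a *\<^sub>C (x::'a::chilbert)) = x"
  by (simp add: cscale_cscale)

lemma norm_add_sq: "(norm (x + y))\<^sup>2 = (norm x)\<^sup>2 + 2 * inner x y + (norm (y::'a::real_inner))\<^sup>2"
  by (simp add: power2_norm_eq_inner inner_add inner_commute)

lemma norm_diff_sq: "(norm (x - y))\<^sup>2 = (norm x)\<^sup>2 - 2 * inner x y + (norm (y::'a::real_inner))\<^sup>2"
  by (simp add: power2_norm_eq_inner inner_diff inner_commute)

lemma inner_ii: "inner (\<i> *\<^sub>C x) (\<i> *\<^sub>C y) = inner x (y::'a::chilbert)"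
proof -
  have a: "(norm (\<i> *\<^sub>C x + \<i> *\<^sub>C y))\<^sup>2 = (norm (x + y))\<^sup>2"
    by (simp add: cscale_add_right[symmetric] norm_cscale)
  have b: "(norm (\<i> *\<^sub>C x))\<^sup>2 = (norm x)\<^sup>2" "(norm (\<i> *\<^sub>C y))\<^sup>2 = (norm y)\<^sup>2"
    by (simp_all add: norm_cscale)
  show ?thesis using a b by (simp add: norm_add_sq)
qed

lemma inner_i_right: "inner u (\<i> *\<^sub>C v) = - inner (\<i> *\<^sub>C u) (v::'a::chilbert)"
proof -
  have "\<i> *\<^sub>C (\<i> *\<^sub>C v) = - v" by (simp add: cscale_cscale cscale_minus_one)
  then have "inner (\<i> *\<^sub>C u) (- v) = inner u (\<i> *\<^sub>C v)" using inner_ii[of u "\<i> *\<^sub>C v"] by simp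
  then show ?thesis by simp
qed

lemma cscale_decomp: "a *\<^sub>C v = Re a *\<^sub>R v + Im a *\<^sub>R (\<i> *\<^sub>C (v::'a::chilbert))"
proof -
  have "a = complex_of_real (Re a) + complex_of_real (Im a) * \<i>" by (simp add: complex_eq_iff)
  then have "a *\<^sub>C v = (complex_of_real (Re a) + complex_of_real (Im a) * \<i>) *\<^sub>C v" by simp
  also have "\<dots> = Re a *\<^sub>R v + Im a *\<^sub>R (\<i> *\<^sub>C v)"
    by (simp add: cscale_add_left cscale_cscale[symmetric] cscale_of_real)
  finally show ?thesis .
qed

lemma inner_cscale_right: "inner u (a *\<^sub>C v) = Re (a * cinner u (v::'a::chilbert))"
  by (simp add: cscale_decomp[of a v] inner_add_right inner_i_right cinner_def)


lemma real_quad_zero: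
  fixes c b :: real
  assumes "b \<ge> 0" "\<And>t. 0 \<le> - 2 * t * c + t\<^sup>2 * b"
  shows "c = 0"
proof (rule ccontr)
  assume "c \<noteq> 0"
  define t where "t = c / (b+1)"
  have ct: "c = t * (b+1)" unfolding t_def using assms(1) by simp
  have "0 \<le> - 2 * t * c + t\<^sup>2 * b" using assms(2) .
  then have "0 \<le> t\<^sup>2 * (- b - 2)" unfolding ct by (simp add: power2_eq_square algebra_simps)
  moreover have "t \<noteq> 0" using ct \<open>c \<noteq> 0\<close> by auto
  then have "t\<^sup>2 * (- b - 2) < 0" using assms(1) by (intro mult_pos_neg) auto
  ultimately show False by simp
qed

lemma projection_exists:
  fixes S :: "'a::{real_inner,complete_space} set"
  assumes cl: "closed S" and z: "0 \<in> S" and add: "\<And>x y. x\<in>S \<Longrightarrow> y\<in>S \<Longrightarrow> x+y\<in>S"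
    and sc: "\<And>r x. x\<in>S \<Longrightarrow> r *\<^sub>R x \<in> S"
  shows "\<exists>p\<in>S. \<forall>s\<in>S. inner (x - p) s = 0"
proof -
  define \<delta> where "\<delta> = infdist x S"
  have d0: "\<delta> \<ge> 0" unfolding \<delta>_def by (rule infdist_nonneg)
  have dle: "\<And>q. q \<in> S \<Longrightarrow> \<delta> \<le> dist x q" unfolding \<delta>_def by (rule infdist_le)
  have approx: "\<exists>q\<in>S. dist x q < \<delta> + e" if "e > 0" for e
  proof (rule ccontr)
    assume "\<not> ?thesis"
    then have "\<And>q. q\<in>S \<Longrightarrow> \<delta> + e \<le> dist x q" by force
    then have "\<delta> + e \<le> infdist x S"
      using z unfolding infdist_def by (auto intro!: cINF_greatest)
    then show False using that \<delta>_def by simp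
  qed
  define e :: "nat \<Rightarrow> real" where "e n = 1 / (real n + 1)" for n
  have e0: "e n > 0" "e n \<le> 1" for n unfolding e_def by auto
  have "\<forall>n. \<exists>q\<in>S. dist x q < \<delta> + e n" using approx e0 by blast
  then obtain s where sS: "\<And>n. s n \<in> S" and sd: "\<And>n. dist x (s n) < \<delta> + e n"
    by metis
  have key: "(norm (s n - s m))\<^sup>2 \<le> 2 * (2*\<delta>+1) * (e n + e m)" for n m
  proof -
    define a where "a = x - s n"
    define b where "b = x - s m"
    have par: "(norm (a - b))\<^sup>2 + (norm (a + b))\<^sup>2 = 2 * (norm a)\<^sup>2 + 2 * (norm b)\<^sup>2"
      by (simp add: norm_add_sq norm_diff_sq)
    have mid: "(1/2) *\<^sub>R (s n + s m) \<in> S" using sS add sc by blast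
    have "a + b = 2 *\<^sub>R (x - (1/2) *\<^sub>R (s n + s m))"
      unfolding a_def b_def by (simp add: algebra_simps scaleR_2)
    then have "norm (a + b) = 2 * dist x ((1/2) *\<^sub>R (s n + s m))"
      by (simp add: dist_norm)
    then have ab: "norm (a+b) \<ge> 2 * \<delta>" using dle[OF mid] by simp
    then have ab2: "(norm (a+b))\<^sup>2 \<ge> 4 * \<delta>\<^sup>2"
      using d0 by (metis power_mono mult_nonneg_nonneg power2_eq_square zero_le_numeral
          power_mult_distrib numeral_times_numeral semiring_norm(12) num_double)
    have na: "norm a < \<delta> + e n" using sd[of n] unfolding a_def by (simp add: dist_norm)
    have nb: "norm b < \<delta> + e m" using sd[of m] unfolding b_def by (simp add: dist_norm)
    have na2: "(norm a)\<^sup>2 \<le> (\<delta> + e n)\<^sup>2" using na by (intro power_mono) auto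
    have nb2: "(norm b)\<^sup>2 \<le> (\<delta> + e m)\<^sup>2" using nb by (intro power_mono) auto
    have "a - b = s m - s n" unfolding a_def b_def by simp
    then have "(norm (s n - s m))\<^sup>2 = (norm (a - b))\<^sup>2" by (simp add: norm_minus_commute)
    also have "\<dots> \<le> 2 * (\<delta> + e n)\<^sup>2 + 2 * (\<delta> + e m)\<^sup>2 - 4 * \<delta>\<^sup>2"
      using par ab2 na2 nb2 by linarith
    also have "\<dots> = 2 * (2*\<delta>*e n + (e n)\<^sup>2) + 2 * (2*\<delta>*e m + (e m)\<^sup>2)"
      by (simp add: power2_eq_square algebra_simps)
    also have "\<dots> \<le> 2 * (2*\<delta>*e n + e n) + 2 * (2*\<delta>*e m + e m)"
    proof -
      have "(e n)\<^sup>2 \<le> e n" "(e m)\<^sup>2 \<le> e m" using e0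
        by (simp_all add: power2_eq_square mult_le_cancel_right1 less_imp_le)
      then show ?thesis by (smt (verit))
    qed
    also have "\<dots> = 2 * (2*\<delta>+1) * (e n + e m)" by (simp add: algebra_simps)
    finally show ?thesis .
  qed
  have "Cauchy s"
  proof (rule metric_CauchyI)
    fix \<epsilon> :: real assume "\<epsilon> > 0"
    obtain N :: nat where N: "4 * (2*\<delta>+1) / \<epsilon>\<^sup>2 < real N"
      using reals_Archimedean2 by blast
    have "4 * (2*\<delta>+1) < real N * \<epsilon>\<^sup>2" using N \<open>\<epsilon>>0\<close> by (simp add: field_simps)
    then have NN: "4 * (2*\<delta>+1) / (real N + 1) < \<epsilon>\<^sup>2"
      using \<open>\<epsilon>>0\<close> d0 by (simp add: field_simps) (smt (verit) mult_pos_pos zero_less_power)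
    show "\<exists>M. \<forall>m\<ge>M. \<forall>n\<ge>M. dist (s m) (s n) < \<epsilon>"
    proof (intro exI allI impI)
      fix m n assume mn: "N \<le> m" "N \<le> n"
      have em: "e m \<le> 1 / (real N + 1)" "e n \<le> 1 / (real N + 1)"
        unfolding e_def using mn by (auto simp: frac_le)
      have "(dist (s m) (s n))\<^sup>2 \<le> 2 * (2*\<delta>+1) * (e m + e n)"
        using key[of m n] by (simp add: dist_norm)
      also have "\<dots> \<le> 2 * (2*\<delta>+1) * (2 / (real N + 1))"
        using em d0 by (intro mult_left_mono) auto
      also have "\<dots> = 4 * (2*\<delta>+1) / (real N + 1)" by simp
      also have "\<dots> < \<epsilon>\<^sup>2" by (rule NN)
      finally have "(dist (s m) (s n))\<^sup>2 < \<epsilon>\<^sup>2" .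
      then show "dist (s m) (s n) < \<epsilon>"
        using \<open>\<epsilon>>0\<close> by (meson abs_le_square_iff less_le_not_le not_less zero_le_dist abs_of_nonneg power_less_imp_less_base)
    qed
  qed
  then obtain p where sp: "s \<longlonglongrightarrow> p" using Cauchy_convergent_iff convergent_def by blast
  have pS: "p \<in> S" using closed_sequentially[OF cl sS sp] .
  have lim1: "(\<lambda>n. dist x (s n)) \<longlonglongrightarrow> dist x p" by (intro tendsto_intros sp)
  have lim0: "(\<lambda>n. 1 / (real n + 1)) \<longlonglongrightarrow> 0"
    using LIMSEQ_inverse_real_of_nat by (simp add: inverse_eq_divide add.commute)
  have lim2: "(\<lambda>n. \<delta> + e n) \<longlonglongrightarrow> \<delta> + 0"
    unfolding e_def by (rule tendsto_add[OF tendsto_const lim0])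
  have dp: "dist x p \<le> \<delta>"
  proof -
    have "eventually (\<lambda>n. dist x (s n) \<le> \<delta> + e n) sequentially"
      using sd less_imp_le by (intro always_eventually) blast
    from tendsto_le[OF sequentially_bot lim2 lim1 this] show ?thesis by simp
  qed
  show ?thesis
  proof (intro bexI[OF _ pS] ballI)
    fix q assume qS: "q \<in> S"
    have "0 \<le> - 2 * t * inner (x - p) q + t\<^sup>2 * (norm q)\<^sup>2" for t
    proof -
      have "p + t *\<^sub>R q \<in> S" using add sc pS qS by blast
      then have "dist x p \<le> dist x (p + t *\<^sub>R q)" using dp dle by fastforce
      then have "norm (x - p) \<le> norm ((x - p) - t *\<^sub>R q)"
        by (simp add: dist_norm algebra_simps)
      then have "(norm (x - p))\<^sup>2 \<le> (norm ((x - p) - t *\<^sub>R q))\<^sup>2"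
        by (intro power_mono) auto
      moreover have "(norm ((x - p) - t *\<^sub>R q))\<^sup>2 = (norm (x - p))\<^sup>2 - 2 * t * inner (x - p) q + t\<^sup>2 * (norm q)\<^sup>2"
        by (simp add: norm_diff_sq power_mult_distrib)
      ultimately show ?thesis by linarith
    qed
    then show "inner (x - p) q = 0" by (intro real_quad_zero[of "(norm q)\<^sup>2"]) auto
  qed
qed


lemma csub_scaleR: "csubspace S \<Longrightarrow> x \<in> S \<Longrightarrow> r *\<^sub>R x \<in> S"
  unfolding csubspace_def by (metis cscale_of_real)

lemma csub_add: "csubspace S \<Longrightarrow> x \<in> S \<Longrightarrow> y \<in> S \<Longrightarrow> x + y \<in> S"
  unfolding csubspace_def by blast

lemma csub_scale: "csubspace S \<Longrightarrow> x \<in> S \<Longrightarrow> a *\<^sub>C x \<in> S"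
  unfolding csubspace_def by blast

lemma csub_zero: "csubspace S \<Longrightarrow> 0 \<in> S"
  unfolding csubspace_def by blast

lemma csub_minus: "csubspace S \<Longrightarrow> x \<in> S \<Longrightarrow> - x \<in> S"
  by (metis csub_scale cscale_minus_one)

lemma csub_diff: "csubspace S \<Longrightarrow> x \<in> S \<Longrightarrow> y \<in> S \<Longrightarrow> x - y \<in> S"
  by (metis csub_add csub_minus diff_conv_add_uminus)

lemma csub_sum: "csubspace S \<Longrightarrow> (\<And>i. i \<in> I \<Longrightarrow> f i \<in> S) \<Longrightarrow> sum f I \<in> S"
  by (induction I rule: infinite_finite_induct) (auto intro: csub_zero csub_add)

lemma cinner_zero_iff: "cinner x y = 0 \<longleftrightarrow> inner x y = 0 \<and> inner (\<i> *\<^sub>C x) y = 0"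
  by (simp add: cinner_def complex_eq_iff)

lemma ortho_real:
  assumes "csubspace S"
  shows "y \<in> ortho S \<longleftrightarrow> (\<forall>x\<in>S. inner x y = 0)"
  using assms unfolding ortho_def cinner_zero_iff by (auto intro: csub_scale)

lemma csubspace_ortho:
  assumes S: "csubspace S"
  shows "csubspace (ortho S)"
  unfolding csubspace_def
proof (intro conjI ballI allI)
  show "0 \<in> ortho S" using ortho_real[OF S] by simp
  fix x y assume "x \<in> ortho S" "y \<in> ortho S"
  then show "x + y \<in> ortho S" using ortho_real[OF S] by (simp add: inner_add_right)
next
  fix a x assume x: "x \<in> ortho S"
  have "inner z (a *\<^sub>C x) = 0" if "z \<in> S" for z
  proof -
    have "inner z x = 0" "inner (\<i> *\<^sub>C z) x = 0" using x that ortho_real[OF S] csub_scale[OF S] by auto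
    then show ?thesis by (simp add: inner_cscale_right cinner_def)
  qed
  then show "a *\<^sub>C x \<in> ortho S" using ortho_real[OF S] by blast
qed

lemma closed_ortho:
  assumes S: "csubspace S"
  shows "closed (ortho S)"
proof -
  have "ortho S = (\<Inter>x\<in>S. {y. inner x y = 0})" using ortho_real[OF S] by auto
  moreover have "closed {y. inner x y = (0::real)}" for x :: 'a
    by (intro closed_Collect_eq continuous_intros)
  ultimately show ?thesis by auto
qed

lemma ortho_inter_zero:
  assumes S: "csubspace S" and "x \<in> S" "x \<in> ortho S"
  shows "x = 0"
  using assms ortho_real[OF S] by auto

lemma proj_decomp:
  assumes S: "csubspace S" and cl: "closed (S::'a::chilbert set)"
  shows "\<exists>p\<in>S. x - p \<in> ortho S"
proof -
  obtain p where "p \<in> S" "\<forall>s\<in>S. inner (x - p) s = 0"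
    using projection_exists[OF cl csub_zero[OF S] csub_add[OF S] csub_scaleR[OF S]] by blast
  then show ?thesis using ortho_real[OF S] by (auto simp: inner_commute)
qed

lemma ortho_sym:
  assumes "csubspace S" "x \<in> S" "y \<in> ortho S"
  shows "cinner y x = 0"
proof -
  have "inner x y = 0" "inner (\<i> *\<^sub>C x) y = 0"
    using assms ortho_real[of S] csub_scale by blast+
  then show ?thesis
    by (simp add: cinner_zero_iff inner_commute) (metis inner_i_right inner_commute neg_equal_0_iff_equal)
qed

lemma ortho_ortho:
  assumes S: "csubspace S" and cl: "closed (S::'a::chilbert set)"
  shows "ortho (ortho S) = S"
proof
  show "S \<subseteq> ortho (ortho S)"
    using ortho_sym[OF S] unfolding ortho_def by auto
  show "ortho (ortho S) \<subseteq> S"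
  proof
    fix x assume x: "x \<in> ortho (ortho S)"
    obtain p where p: "p \<in> S" "x - p \<in> ortho S" using proj_decomp[OF S cl] by blast
    have So: "csubspace (ortho S)" by (rule csubspace_ortho[OF S])
    have "p \<in> ortho (ortho S)" using p(1) ortho_sym[OF S] unfolding ortho_def by auto
    then have "x - p \<in> ortho (ortho S)" using x csub_diff[OF csubspace_ortho[OF So]] by blast
    then have "x - p = 0" using ortho_inter_zero[OF So p(2)] by blast
    then show "x \<in> S" using p by simp
  qed
qed


definition sc :: "complex \<Rightarrow> (nat \<Rightarrow> nat \<Rightarrow> nat \<Rightarrow> complex) \<Rightarrow> (nat \<Rightarrow> nat \<Rightarrow> nat \<Rightarrow> complex)" where
  "sc t Z = (\<lambda>k i j. t * Z k i j)"

lemma sc_one [simp]: "sc 1 Z = Z" by (simp add: sc_def)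
lemma sc_zero [simp]: "sc 0 Z = (\<lambda>k i j. 0)" by (simp add: sc_def)

lemma Zpow_sc: "Zpow n (sc t Z) w = (\<lambda>i j. t ^ length w * Zpow n Z w i j)"
  by (induction w) (auto simp: matmul_def sc_def sum_distrib_left algebra_simps)

lemma words_length: "w \<in> words d k \<Longrightarrow> length w = k"
  by (simp add: words_def)

lemma finite_words: "finite (words d k)"
proof -
  have "words d k = {xs. set xs \<subseteq> {1..d} \<and> length xs = k}" by (auto simp: words_def)
  then show ?thesis by (simp add: finite_lists_length_eq)
qed

lemma words_0: "words d 0 = {[]}" by (auto simp: words_def)

lemma hterm_sc: "hterm d n Bh (sc t Z) x k i = t ^ k *\<^sub>C hterm d n Bh Z x k i"
  unfolding hterm_def Zpow_sc cscale_sum_right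
  by (intro sum.cong refl) (auto simp: words_length cscale_cscale)

lemma Zpow_zero: "w \<noteq> [] \<Longrightarrow> Zpow n (\<lambda>k i j. 0) w = (\<lambda>i j. 0)"
  by (cases w) (auto simp: matmul_def)

lemma Zpow_zero': "length w = Suc k \<Longrightarrow> Zpow n (\<lambda>k i j. 0) w i j = 0"
  by (cases w) (auto simp: matmul_def)

lemma hterm_zero_Suc: "hterm d n Bh (\<lambda>k i j. 0) x (Suc k) i = 0"
  unfolding hterm_def
  by (intro sum.neutral ballI) (auto simp: Zpow_zero' words_def)

lemma hterm_zero_0: "i < n \<Longrightarrow> hterm d n Bh Z x 0 i = Bh [] (x i)"
proof -
  assume i: "i < n"
  have "hterm d n Bh Z x 0 i = (\<Sum>j<n. (if i = j then 1 else 0) *\<^sub>C Bh [] (x j))"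
    by (simp add: hterm_def words_0)
  also have "\<dots> = (\<Sum>j<n. (if j = i then Bh [] (x j) else 0))"
    by (rule sum.cong) auto
  also have "\<dots> = Bh [] (x i)" using i by (simp add: sum.delta')
  finally show ?thesis .
qed

lemma Beval_zero: "i < n \<Longrightarrow> Beval d n Bh (\<lambda>k i j. 0) x i = Bh [] (x i)"
proof -
  assume i: "i < n"
  have "(\<lambda>k. hterm d n Bh (\<lambda>k i j. 0) x k i) = (\<lambda>k. if k = 0 then Bh [] (x i) else 0)"
  proof
    fix k show "hterm d n Bh (\<lambda>k i j. 0) x k i = (if k = 0 then Bh [] (x i) else 0)"
      using i by (cases k) (simp_all add: hterm_zero_0 hterm_zero_Suc)
  qed
  moreover have "(\<lambda>k. if k = 0 then Bh [] (x i) else 0) sums Bh [] (x i)"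
    using sums_single[of 0 "\<lambda>_. Bh [] (x i)"] by simp
  ultimately show ?thesis using i by (simp add: Beval_def sums_iff)
qed

lemma Beval_outside: "\<not> i < n \<Longrightarrow> Beval d n Bh Z x i = 0"
  by (simp add: Beval_def)

lemma Beval_vecs: "Beval d n Bh Z x \<in> vecs n UNIV"
  by (simp add: vecs_def Beval_def)

definition vn2 :: "nat \<Rightarrow> (nat \<Rightarrow> 'a::real_inner) \<Rightarrow> real" where
  "vn2 n x = (\<Sum>i<n. (norm (x i))\<^sup>2)"

definition vin :: "nat \<Rightarrow> (nat \<Rightarrow> 'a::real_inner) \<Rightarrow> (nat \<Rightarrow> 'a) \<Rightarrow> real" where
  "vin n x y = (\<Sum>i<n. inner (x i) (y i))"

lemma vnorm_vn2: "vnorm n x = sqrt (vn2 n x)"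
  by (simp add: vnorm_def vn2_def)

lemma vn2_nonneg: "vn2 n x \<ge> 0"
  by (simp add: vn2_def sum_nonneg)

lemma vnorm_le_iff: "vnorm n x \<le> vnorm n y \<longleftrightarrow> vn2 n x \<le> vn2 n y"
  by (simp add: vnorm_vn2)

lemma vnorm_less_iff: "vnorm n x < vnorm n y \<longleftrightarrow> vn2 n x < vn2 n y"
  by (simp add: vnorm_vn2)

lemma vnorm_eq_iff: "vnorm n x = vnorm n y \<longleftrightarrow> vn2 n x = vn2 n y"
  using vn2_nonneg by (simp add: vnorm_vn2)

lemma vn2_add_scaleR: "vn2 n (\<lambda>i. u i + t *\<^sub>R v i) = vn2 n u + 2 * t * vin n u v + t\<^sup>2 * vn2 n v"
  by (simp add: vn2_def vin_def norm_add_sq sum.distrib sum_distrib_left power_mult_distrib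
      algebra_simps)

lemma vn2_diff: "vn2 n (\<lambda>i. u i - v i) = vn2 n u - 2 * vin n u v + vn2 n v"
  by (simp add: vn2_def vin_def norm_diff_sq sum.distrib sum_subtractf sum_distrib_left)

lemma vin_le: "2 * vin n u v \<le> vn2 n u + vn2 n v"
proof -
  have "vn2 n (\<lambda>i. u i - v i) \<ge> 0" by (rule vn2_nonneg)
  then show ?thesis by (simp add: vn2_diff)
qed

lemma vn2_zero_iff: "vn2 n x = 0 \<longleftrightarrow> (\<forall>i<n. x i = 0)"
  by (auto simp: vn2_def sum_nonneg_eq_0_iff)

lemma real_lin_zero:
  fixes c M :: real
  assumes "\<And>t. 2 * t * c \<le> M"
  shows "c = 0"
proof (rule ccontr)
  assume c: "c \<noteq> 0"
  define t where "t = (\<bar>M\<bar> + 1) / (2 * c)"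
  have "2 * t * c \<le> M" by (rule assms)
  moreover have "2 * t * c = \<bar>M\<bar> + 1" using c by (simp add: t_def)
  ultimately show False by linarith
qed

lemma aux_ineq: "(a::real) + 2 * t * c + q \<le> b + 2 * t * 0 + q \<Longrightarrow> 0 \<le> a \<Longrightarrow> 2 * t * c \<le> b"
  by simp

locale schurB =
  fixes d :: nat and Bh :: "nat list \<Rightarrow> 'h::chilbert \<Rightarrow> 'j::chilbert"
  assumes S: "schur d (UNIV :: 'h set) (UNIV :: 'j set) Bh"
begin

lemma coefs: "set w \<subseteq> {1..d} \<Longrightarrow> Bh w ` UNIV \<subseteq> UNIV \<and>
        (\<forall>x\<in>UNIV. \<forall>y\<in>UNIV. Bh w (x + y) = Bh w x + Bh w y) \<and>
        (\<forall>a. \<forall>x\<in>UNIV. Bh w (a *\<^sub>C x) = a *\<^sub>C Bh w x) \<and>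
        (\<exists>C. \<forall>x\<in>UNIV. norm (Bh w x) \<le> C * norm x)"
  using conjunct1[OF S[unfolded schur_def], THEN spec[of _ w]] by (rule mp)

lemma lin_add: "set w \<subseteq> {1..d} \<Longrightarrow> Bh w (x + y) = Bh w x + Bh w y"
  using coefs[of w] by simp

lemma lin_scale: "set w \<subseteq> {1..d} \<Longrightarrow> Bh w (a *\<^sub>C x) = a *\<^sub>C Bh w x"
  using coefs[of w] by simp

lemma lin_zero: "set w \<subseteq> {1..d} \<Longrightarrow> Bh w 0 = 0"
  using lin_scale[of w 0 0] by simp

lemma bound: "set w \<subseteq> {1..d} \<Longrightarrow> \<exists>C. \<forall>x. norm (Bh w x) \<le> C * norm x"
  using coefs[of w] by simp

lemma series: "n > 0 \<Longrightarrow> Z \<in> rowball d n \<Longrightarrow> x \<in> vecs n UNIV \<Longrightarrow>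
    (\<forall>i<n. summable (\<lambda>k. hterm d n Bh Z x k i)) \<and> vnorm n (Beval d n Bh Z x) \<le> vnorm n x"
  using conjunct2[OF S[unfolded schur_def]] by blast

lemma summ: "n > 0 \<Longrightarrow> Z \<in> rowball d n \<Longrightarrow> x \<in> vecs n UNIV \<Longrightarrow> i < n \<Longrightarrow>
    summable (\<lambda>k. hterm d n Bh Z x k i)"
  using series by blast

lemma contr: "n > 0 \<Longrightarrow> Z \<in> rowball d n \<Longrightarrow> x \<in> vecs n UNIV \<Longrightarrow>
    vn2 n (Beval d n Bh Z x) \<le> vn2 n x"
  using series vnorm_le_iff by blast

lemma words_sub: "w \<in> words d k \<Longrightarrow> set w \<subseteq> {1..d}"
  by (simp add: words_def)

lemma hterm_add: "hterm d n Bh Z (\<lambda>j. x j + y j) k i = hterm d n Bh Z x k i + hterm d n Bh Z y k i"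
  unfolding hterm_def sum.distrib[symmetric]
  by (intro sum.cong refl) (simp add: lin_add[OF words_sub] cscale_add_right)

lemma hterm_scale: "hterm d n Bh Z (\<lambda>j. a *\<^sub>C x j) k i = a *\<^sub>C hterm d n Bh Z x k i"
  unfolding hterm_def cscale_sum_right
  by (intro sum.cong refl) (simp add: lin_scale[OF words_sub] cscale_cscale mult.commute)

lemma vecs_add: "(x::nat\<Rightarrow>'h) \<in> vecs n UNIV \<Longrightarrow> y \<in> vecs n UNIV \<Longrightarrow> (\<lambda>j. x j + y j) \<in> vecs n UNIV"
  by (simp add: vecs_def)

lemma vecs_scale: "(x::nat\<Rightarrow>'h) \<in> vecs n UNIV \<Longrightarrow> (\<lambda>j. a *\<^sub>C x j) \<in> vecs n UNIV"
  by (simp add: vecs_def)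

lemma Beval_add:
  assumes "n > 0" "Z \<in> rowball d n" "x \<in> vecs n UNIV" "y \<in> vecs n UNIV"
  shows "Beval d n Bh Z (\<lambda>j. x j + y j) = (\<lambda>i. Beval d n Bh Z x i + Beval d n Bh Z y i)"
proof
  fix i show "Beval d n Bh Z (\<lambda>j. x j + y j) i = Beval d n Bh Z x i + Beval d n Bh Z y i"
    using assms summ[of n Z x i] summ[of n Z y i]
    by (simp add: Beval_def hterm_add suminf_add)
qed

lemma Beval_scale:
  assumes "n > 0" "Z \<in> rowball d n" "x \<in> vecs n UNIV"
  shows "Beval d n Bh Z (\<lambda>j. a *\<^sub>C x j) = (\<lambda>i. a *\<^sub>C Beval d n Bh Z x i)"
proof
  fix i show "Beval d n Bh Z (\<lambda>j. a *\<^sub>C x j) i = a *\<^sub>C Beval d n Bh Z x i"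
    using assms summ[of n Z x i]
    by (simp add: Beval_def hterm_scale bounded_linear.suminf[OF bounded_linear_cscale])
qed

lemma Beval_add_scaleR:
  assumes "n > 0" "Z \<in> rowball d n" "x \<in> vecs n UNIV" "y \<in> vecs n UNIV"
  shows "Beval d n Bh Z (\<lambda>j. x j + t *\<^sub>R y j) = (\<lambda>i. Beval d n Bh Z x i + t *\<^sub>R Beval d n Bh Z y i)"
proof -
  have "(\<lambda>j. x j + t *\<^sub>R y j) = (\<lambda>j. x j + (\<lambda>j. complex_of_real t *\<^sub>C y j) j)"
    by (simp add: cscale_of_real)
  then have "Beval d n Bh Z (\<lambda>j. x j + t *\<^sub>R y j)
     = (\<lambda>i. Beval d n Bh Z x i + Beval d n Bh Z (\<lambda>j. complex_of_real t *\<^sub>C y j) i)"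
    using Beval_add[OF assms(1,2,3) vecs_scale[OF assms(4)]] by simp
  also have "\<dots> = (\<lambda>i. Beval d n Bh Z x i + complex_of_real t *\<^sub>C Beval d n Bh Z y i)"
    unfolding Beval_scale[OF assms(1,2,4)] ..
  finally show ?thesis by (simp add: cscale_of_real)
qed

lemma ortho_lemma:
  assumes n: "n > 0" and Z: "Z \<in> rowball d n" and x: "x \<in> vecs n UNIV" and y: "y \<in> vecs n UNIV"
    and xy: "vin n x y = 0" and iso: "vn2 n (Beval d n Bh Z y) = vn2 n y"
  shows "vin n (Beval d n Bh Z x) (Beval d n Bh Z y) = 0"
proof (rule real_lin_zero)
  fix t
  have z: "(\<lambda>j. x j + t *\<^sub>R y j) \<in> vecs n UNIV" using x y by (auto simp: vecs_def)
  have "vn2 n (Beval d n Bh Z (\<lambda>j. x j + t *\<^sub>R y j)) \<le> vn2 n (\<lambda>j. x j + t *\<^sub>R y j)"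
    by (rule contr[OF n Z z])
  then have "vn2 n (Beval d n Bh Z x) + 2 * t * vin n (Beval d n Bh Z x) (Beval d n Bh Z y)
      + t\<^sup>2 * vn2 n (Beval d n Bh Z y) \<le> vn2 n x + 2 * t * vin n x y + t\<^sup>2 * vn2 n y"
    unfolding Beval_add_scaleR[OF n Z x y] vn2_add_scaleR .
  then show "2 * t * vin n (Beval d n Bh Z x) (Beval d n Bh Z y) \<le> vn2 n x"
    using vn2_nonneg[of n "Beval d n Bh Z x"] unfolding xy iso by (rule aux_ineq)
qed

end


lemma CS2:
  fixes a b :: "nat \<Rightarrow> nat \<Rightarrow> complex"
  assumes "finite A" "finite B"
  shows "(cmod (\<Sum>k\<in>A. \<Sum>j\<in>B. a k j * b k j))\<^sup>2 \<le>
     (\<Sum>k\<in>A. \<Sum>j\<in>B. (cmod (a k j))\<^sup>2) * (\<Sum>k\<in>A. \<Sum>j\<in>B. (cmod (b k j))\<^sup>2)"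
proof -
  have "cmod (\<Sum>k\<in>A. \<Sum>j\<in>B. a k j * b k j) \<le> (\<Sum>k\<in>A. \<Sum>j\<in>B. cmod (a k j) * cmod (b k j))"
    by (rule order_trans[OF norm_sum sum_mono]) (simp add: order_trans[OF norm_sum] norm_mult)
  also have "\<dots> = (\<Sum>p\<in>A\<times>B. cmod (a (fst p) (snd p)) * cmod (b (fst p) (snd p)))"
    by (simp add: sum.cartesian_product split_def)
  finally have "(cmod (\<Sum>k\<in>A. \<Sum>j\<in>B. a k j * b k j))\<^sup>2 \<le>
      (\<Sum>p\<in>A\<times>B. cmod (a (fst p) (snd p)) * cmod (b (fst p) (snd p)))\<^sup>2"
    by (intro power_mono) auto
  also have "\<dots> \<le> (\<Sum>p\<in>A\<times>B. (cmod (a (fst p) (snd p)))\<^sup>2) * (\<Sum>p\<in>A\<times>B. (cmod (b (fst p) (snd p)))\<^sup>2)"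
    by (rule Cauchy_Schwarz_ineq_sum)
  also have "\<dots> = (\<Sum>k\<in>A. \<Sum>j\<in>B. (cmod (a k j))\<^sup>2) * (\<Sum>k\<in>A. \<Sum>j\<in>B. (cmod (b k j))\<^sup>2)"
    by (simp add: sum.cartesian_product split_def)
  finally show ?thesis .
qed

definition rset :: "nat \<Rightarrow> nat \<Rightarrow> (nat \<Rightarrow> nat \<Rightarrow> nat \<Rightarrow> complex) \<Rightarrow> real set" where
  "rset d n Z = {sqrt (\<Sum>i<n. (cmod (\<Sum>k\<in>{1..d}. \<Sum>j<n. Z k i j * v k j))\<^sup>2) | v.
      (\<Sum>k\<in>{1..d}. \<Sum>j<n. (cmod (v k j))\<^sup>2) \<le> 1}"

lemma rownorm_rset: "rownorm d n Z = Sup (rset d n Z)"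
  by (simp add: rownorm_def rset_def)

definition frob :: "nat \<Rightarrow> nat \<Rightarrow> (nat \<Rightarrow> nat \<Rightarrow> nat \<Rightarrow> complex) \<Rightarrow> real" where
  "frob d n Z = (\<Sum>i<n. \<Sum>k\<in>{1..d}. \<Sum>j<n. (cmod (Z k i j))\<^sup>2)"

lemma rset_bound: "s \<in> rset d n Z \<Longrightarrow> s \<le> sqrt (frob d n Z)"
proof -
  assume "s \<in> rset d n Z"
  then obtain v where s: "s = sqrt (\<Sum>i<n. (cmod (\<Sum>k\<in>{1..d}. \<Sum>j<n. Z k i j * v k j))\<^sup>2)"
    and v: "(\<Sum>k\<in>{1..d}. \<Sum>j<n. (cmod (v k j))\<^sup>2) \<le> 1"
    unfolding rset_def by blast
  have "(\<Sum>i<n. (cmod (\<Sum>k\<in>{1..d}. \<Sum>j<n. Z k i j * v k j))\<^sup>2) \<le> frob d n Z"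
    unfolding frob_def
  proof (rule sum_mono)
    fix i
    have "(cmod (\<Sum>k\<in>{1..d}. \<Sum>j<n. Z k i j * v k j))\<^sup>2 \<le>
        (\<Sum>k\<in>{1..d}. \<Sum>j<n. (cmod (Z k i j))\<^sup>2) * (\<Sum>k\<in>{1..d}. \<Sum>j<n. (cmod (v k j))\<^sup>2)"
      by (rule CS2) auto
    also have "\<dots> \<le> (\<Sum>k\<in>{1..d}. \<Sum>j<n. (cmod (Z k i j))\<^sup>2) * 1"
      using v by (intro mult_left_mono) (auto intro!: sum_nonneg)
    finally show "(cmod (\<Sum>k\<in>{1..d}. \<Sum>j<n. Z k i j * v k j))\<^sup>2 \<le> (\<Sum>k\<in>{1..d}. \<Sum>j<n. (cmod (Z k i j))\<^sup>2)"
      by simp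
  qed
  then show ?thesis using s by simp
qed

lemma rset_zero: "0 \<in> rset d n Z"
  unfolding rset_def by (rule CollectI, rule exI[of _ "\<lambda>k j. 0"]) simp

lemma rset_ne: "rset d n Z \<noteq> {}" using rset_zero by blast

lemma rset_bdd: "bdd_above (rset d n Z)"
  by (rule bdd_aboveI[where M="sqrt (frob d n Z)"]) (rule rset_bound)

lemma rownorm_nonneg: "rownorm d n Z \<ge> 0"
  unfolding rownorm_rset using cSup_upper[OF rset_zero rset_bdd] .

lemma rset_sc: "s \<in> rset d n (sc t Z) \<Longrightarrow> \<exists>s'\<in>rset d n Z. s = cmod t * s'"
proof -
  assume "s \<in> rset d n (sc t Z)"
  then obtain v where s: "s = sqrt (\<Sum>i<n. (cmod (\<Sum>k\<in>{1..d}. \<Sum>j<n. sc t Z k i j * v k j))\<^sup>2)"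
    and v: "(\<Sum>k\<in>{1..d}. \<Sum>j<n. (cmod (v k j))\<^sup>2) \<le> 1"
    unfolding rset_def by blast
  have e1: "(\<Sum>k\<in>{1..d}. \<Sum>j<n. sc t Z k i j * v k j) = t * (\<Sum>k\<in>{1..d}. \<Sum>j<n. Z k i j * v k j)" for i
    by (simp add: sc_def sum_distrib_left mult.assoc)
  have e2: "(cmod (\<Sum>k\<in>{1..d}. \<Sum>j<n. sc t Z k i j * v k j))\<^sup>2 = (cmod t)\<^sup>2 * (cmod (\<Sum>k\<in>{1..d}. \<Sum>j<n. Z k i j * v k j))\<^sup>2" for i
    unfolding e1 norm_mult power_mult_distrib ..
  have "s = sqrt ((cmod t)\<^sup>2 * (\<Sum>i<n. (cmod (\<Sum>k\<in>{1..d}. \<Sum>j<n. Z k i j * v k j))\<^sup>2))"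
    unfolding s e2 sum_distrib_left ..
  also have "\<dots> = cmod t * sqrt (\<Sum>i<n. (cmod (\<Sum>k\<in>{1..d}. \<Sum>j<n. Z k i j * v k j))\<^sup>2)"
    by (simp add: real_sqrt_mult)
  finally show ?thesis using v unfolding rset_def by blast
qed

lemma rownorm_sc: "rownorm d n (sc t Z) \<le> cmod t * rownorm d n Z"
  unfolding rownorm_rset
proof (rule cSup_least[OF rset_ne])
  fix s assume "s \<in> rset d n (sc t Z)"
  then obtain s' where "s' \<in> rset d n Z" "s = cmod t * s'" using rset_sc by blast
  then show "s \<le> cmod t * Sup (rset d n Z)"
    using rset_bdd by (auto intro!: mult_left_mono cSup_upper)
qed

definition radius :: "nat \<Rightarrow> nat \<Rightarrow> (nat \<Rightarrow> nat \<Rightarrow> nat \<Rightarrow> complex) \<Rightarrow> real" where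
  "radius d n Z = 2 / (1 + rownorm d n Z)"

lemma radius_gt1: "Z \<in> rowball d n \<Longrightarrow> radius d n Z > 1"
  using rownorm_nonneg[of d n Z] by (simp add: radius_def rowball_def)

lemma sc_rowball: "Z \<in> rowball d n \<Longrightarrow> cmod t < radius d n Z \<Longrightarrow> sc t Z \<in> rowball d n"
proof -
  assume Z: "Z \<in> rowball d n" and t: "cmod t < radius d n Z"
  define r where "r = rownorm d n Z"
  have r: "0 \<le> r" "r < 1" using Z rownorm_nonneg[of d n Z] by (auto simp: r_def rowball_def)
  have "cmod t * r \<le> 2 / (1 + r) * r" using t r by (intro mult_right_mono) (auto simp: radius_def r_def)
  also have "\<dots> < 1" using r by (simp add: field_simps)
  finally have "cmod t * r < 1" .
  then show ?thesis using rownorm_sc[of d n t Z] by (simp add: rowball_def r_def)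
qed

lemma rownorm_le_frob: "rownorm d n Z \<le> sqrt (frob d n Z)"
  unfolding rownorm_rset by (rule cSup_least[OF rset_ne]) (rule rset_bound)


lemma maxre:
  fixes c :: "nat \<Rightarrow> complex" and R :: real
  assumes summ: "\<And>t. cmod t < R \<Longrightarrow> summable (\<lambda>k. c k * t ^ k)"
    and t0: "cmod t0 < R"
    and le: "\<And>t. cmod t < R \<Longrightarrow> Re (\<Sum>k. c k * t ^ k) \<le> Re (\<Sum>k. c k * t0 ^ k)"
    and t: "cmod t < R"
  shows "(\<Sum>k. c k * t ^ k) = (\<Sum>k. c k * t0 ^ k)"
proof -
  define f where "f = eval_fps (Abs_fps c)"
  have f: "f z = (\<Sum>k. c k * z ^ k)" for z by (simp add: f_def eval_fps_def)
  have "conv_radius c \<ge> ereal R"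
    by (rule conv_radius_geI_ex') (use summ in auto)
  have "ball 0 R \<subseteq> eball 0 (fps_conv_radius (Abs_fps c))"
    by (rule ball_eball_mono) (simp add: fps_conv_radius_def \<open>conv_radius c \<ge> ereal R\<close>)
  then have hol: "f holomorphic_on ball 0 R" unfolding f_def by (rule holomorphic_on_eval_fps)
  have "f constant_on ball 0 R"
  proof (rule ccontr)
    assume nc: "\<not> f constant_on ball 0 R"
    have op: "open (f ` ball 0 R)"
      by (rule open_mapping_thm[OF hol]) (simp_all add: nc)
    have "t0 \<in> ball 0 R" using t0 by simp
    then have "f t0 \<in> f ` ball 0 R" by (rule imageI)
    then obtain e where e: "e > 0" "ball (f t0) e \<subseteq> f ` ball 0 R"
      using op unfolding open_contains_ball by blast
    have "f t0 + of_real (e/2) \<in> ball (f t0) e" using e by (simp add: dist_norm)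
    then have "f t0 + of_real (e/2) \<in> f ` ball 0 R" using e(2) by (rule subsetD[rotated])
    then obtain s where s: "s \<in> ball 0 R" "f t0 + of_real (e/2) = f s" by (rule imageE)
    have "cmod s < R" using s(1) by simp
    then have "Re (f s) \<le> Re (f t0)" unfolding f by (rule le)
    moreover have "Re (f s) = Re (f t0) + e/2" unfolding s(2)[symmetric] by simp
    ultimately show False using e(1) by simp
  qed
  then obtain C where "\<forall>x\<in>ball 0 R. f x = C" unfolding constant_on_def by blast
  moreover have "t \<in> ball 0 R" "t0 \<in> ball 0 R" using t t0 by simp_all
  ultimately have "f t = f t0" by simp
  then show ?thesis by (simp add: f)
qed


lemma Im_as_Re: "Im z = Re (- \<i> * z)"
  by simp

context schurB begin

lemma core:
  assumes n: "n > 0" and Z: "Z \<in> rowball d n" and x: "x \<in> vecs n UNIV"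
    and t0: "cmod t0 < radius d n Z"
    and iso: "vn2 n (Beval d n Bh (sc t0 Z) x) = vn2 n x"
    and t: "cmod t < radius d n Z"
  shows "Beval d n Bh (sc t Z) x = Beval d n Bh (sc t0 Z) x"
proof -
  define R where "R = radius d n Z"
  define u where "u = Beval d n Bh (sc t0 Z) x"
  define h where "h k i = hterm d n Bh Z x k i" for k i
  define c where "c k = (\<Sum>i<n. cinner (u i) (h k i))" for k
  have claim: "summable (\<lambda>k. c k * s ^ k) \<and>
      Re (\<Sum>k. c k * s ^ k) = vin n u (Beval d n Bh (sc s Z) x)" if s: "cmod s < R" for s
  proof -
    have Zs: "sc s Z \<in> rowball d n" using sc_rowball[OF Z] s by (simp add: R_def)
    have hs: "hterm d n Bh (sc s Z) x k i = s ^ k *\<^sub>C h k i" for k i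
      by (simp add: hterm_sc h_def)
    have sm: "summable (\<lambda>k. hterm d n Bh (sc s Z) x k i)" if "i < n" for i
      by (rule summ[OF n Zs x that])
    have re: "Re (c k * s ^ k) = (\<Sum>i<n. inner (u i) (hterm d n Bh (sc s Z) x k i))" for k
    proof -
      have "Re (c k * s ^ k) = Re (\<Sum>i<n. s ^ k * cinner (u i) (h k i))"
        by (rule arg_cong[where f=Re]) (simp add: c_def sum_distrib_left mult.commute)
      also have "\<dots> = (\<Sum>i<n. Re (s ^ k * cinner (u i) (h k i)))" by (rule Re_sum)
      also have "\<dots> = (\<Sum>i<n. inner (u i) (s ^ k *\<^sub>C h k i))" by (simp only: inner_cscale_right)
      also have "\<dots> = (\<Sum>i<n. inner (u i) (hterm d n Bh (sc s Z) x k i))" by (simp only: hs)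
      finally show ?thesis .
    qed
    have im: "Im (c k * s ^ k) = (\<Sum>i<n. inner (u i) ((- \<i>) *\<^sub>C hterm d n Bh (sc s Z) x k i))" for k
    proof -
      have "Im (c k * s ^ k) = Re (- \<i> * (c k * s ^ k))" by (rule Im_as_Re)
      also have "\<dots> = Re (\<Sum>i<n. (- \<i> * s ^ k) * cinner (u i) (h k i))"
        by (rule arg_cong[where f=Re]) (simp add: c_def sum_distrib_left mult.commute mult.left_commute mult.assoc)
      also have "\<dots> = (\<Sum>i<n. Re ((- \<i> * s ^ k) * cinner (u i) (h k i)))" by (rule Re_sum)
      also have "\<dots> = (\<Sum>i<n. inner (u i) ((- \<i>) *\<^sub>C hterm d n Bh (sc s Z) x k i))"
        by (simp add: hs cscale_cscale inner_cscale_right)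
      finally show ?thesis .
    qed
    have sre: "summable (\<lambda>k. Re (c k * s ^ k))"
      unfolding re
      by (intro summable_sum bounded_linear.summable[OF bounded_linear_inner_right] sm) simp
    have sim: "summable (\<lambda>k. Im (c k * s ^ k))"
      unfolding im
      by (intro summable_sum bounded_linear.summable[OF bounded_linear_inner_right]
          bounded_linear.summable[OF bounded_linear_cscale] sm) simp
    have su: "summable (\<lambda>k. c k * s ^ k)" using sre sim summable_complex_iff by blast
    have "Re (\<Sum>k. c k * s ^ k) = (\<Sum>k. Re (c k * s ^ k))" by (rule Re_suminf[OF su])
    also have "\<dots> = (\<Sum>k. \<Sum>i<n. inner (u i) (hterm d n Bh (sc s Z) x k i))" unfolding re ..
    also have "\<dots> = (\<Sum>i<n. \<Sum>k. inner (u i) (hterm d n Bh (sc s Z) x k i))"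
      by (rule suminf_sum) (intro bounded_linear.summable[OF bounded_linear_inner_right] sm, simp)
    also have "\<dots> = (\<Sum>i<n. inner (u i) (\<Sum>k. hterm d n Bh (sc s Z) x k i))"
      by (intro sum.cong refl bounded_linear.suminf[OF bounded_linear_inner_right, symmetric] sm) simp
    also have "\<dots> = vin n u (Beval d n Bh (sc s Z) x)"
      by (simp add: vin_def Beval_def)
    finally show ?thesis using su by blast
  qed
  have bound: "vin n u (Beval d n Bh (sc s Z) x) \<le> vn2 n x" if s: "cmod s < R" for s
  proof -
    have Zs: "sc s Z \<in> rowball d n" using sc_rowball[OF Z] s by (simp add: R_def)
    have "2 * vin n u (Beval d n Bh (sc s Z) x) \<le> vn2 n u + vn2 n (Beval d n Bh (sc s Z) x)"
      by (rule vin_le)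
    moreover have "vn2 n (Beval d n Bh (sc s Z) x) \<le> vn2 n x" by (rule contr[OF n Zs x])
    moreover have "vn2 n u = vn2 n x" using iso by (simp add: u_def)
    ultimately show ?thesis by linarith
  qed
  have vuu: "vin n u u = vn2 n x"
    using iso by (simp add: u_def vin_def vn2_def power2_norm_eq_inner)
  have t0R: "cmod t0 < R" using t0 by (simp add: R_def)
  have tR: "cmod t < R" using t by (simp add: R_def)
  have eq: "(\<Sum>k. c k * t ^ k) = (\<Sum>k. c k * t0 ^ k)"
  proof (rule maxre[where R=R])
    show "summable (\<lambda>k. c k * s ^ k)" if "cmod s < R" for s using claim[OF that] by blast
    show "Re (\<Sum>k. c k * s ^ k) \<le> Re (\<Sum>k. c k * t0 ^ k)" if "cmod s < R" for s
      using claim[OF that] claim[OF t0R] bound[OF that] vuu by (simp add: u_def)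
  qed (use t0R tR in auto)
  have vt: "vin n u (Beval d n Bh (sc t Z) x) = vn2 n x"
    using claim[OF tR] claim[OF t0R] eq vuu by (simp add: u_def)
  define v where "v = Beval d n Bh (sc t Z) x"
  have Zt: "sc t Z \<in> rowball d n" using sc_rowball[OF Z] t by simp
  have "vn2 n (\<lambda>i. v i - u i) = vn2 n v - 2 * vin n v u + vn2 n u" by (rule vn2_diff)
  also have "vin n v u = vin n u v" by (simp add: vin_def inner_commute)
  also have "vin n u v = vn2 n x" using vt by (simp add: v_def)
  also have "vn2 n u = vn2 n x" using iso by (simp add: u_def)
  finally have "vn2 n (\<lambda>i. v i - u i) \<le> 0"
    using contr[OF n Zt x] by (simp add: v_def)
  then have "vn2 n (\<lambda>i. v i - u i) = 0" using vn2_nonneg[of n "\<lambda>i. v i - u i"] by linarith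
  then have "\<forall>i<n. v i = u i" unfolding vn2_zero_iff by simp
  then have "v = u"
  proof (intro ext)
    fix i assume a: "\<forall>i<n. v i = u i"
    show "v i = u i"
    proof (cases "i < n")
      case True then show ?thesis using a by simp
    next
      case False then show ?thesis by (simp add: v_def u_def Beval_outside)
    qed
  qed
  then show ?thesis by (simp add: v_def u_def)
qed

end


lemma zero_rowball: "(\<lambda>k i j. 0) \<in> rowball d n"
proof -
  have "rownorm d n (sc 0 (\<lambda>k i j. 0)) \<le> cmod 0 * rownorm d n (\<lambda>k i j. 0)" by (rule rownorm_sc)
  then show ?thesis by (simp add: rowball_def)
qed

definition ev :: "nat \<Rightarrow> 'a::zero \<Rightarrow> nat \<Rightarrow> 'a" where
  "ev i k = (\<lambda>j. if j = i then k else 0)"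

lemma vn2_ev: "i < n \<Longrightarrow> vn2 n (ev i k) = (norm (k::'a::real_inner))\<^sup>2"
proof -
  assume i: "i < n"
  have "vn2 n (ev i k) = (\<Sum>j<n. if j = i then (norm k)\<^sup>2 else 0)"
    unfolding vn2_def ev_def by (rule sum.cong) auto
  also have "\<dots> = (norm k)\<^sup>2" using i by (simp add: sum.delta')
  finally show ?thesis .
qed

lemma vin_ev: "i < n \<Longrightarrow> vin n x (ev i k) = inner (x i) (k::'a::real_inner)"
proof -
  assume i: "i < n"
  have "vin n x (ev i k) = (\<Sum>j<n. if j = i then inner (x i) k else 0)"
    unfolding vin_def ev_def by (rule sum.cong) auto
  also have "\<dots> = inner (x i) k" using i by (simp add: sum.delta')
  finally show ?thesis .
qed

lemma ev_vecs: "i < n \<Longrightarrow> k \<in> S \<Longrightarrow> 0 \<in> S \<Longrightarrow> ev i k \<in> vecs n S"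
  by (auto simp: vecs_def ev_def)

lemma vecs_mono: "S \<subseteq> T \<Longrightarrow> x \<in> vecs n S \<Longrightarrow> x \<in> vecs n T"
  by (auto simp: vecs_def)

lemma vecs_UNIV: "x \<in> vecs n S \<Longrightarrow> x \<in> vecs n UNIV"
  by (auto simp: vecs_def)

context schurB begin

lemma nil_sub: "set [] \<subseteq> {1..d}" by simp

lemma A_add: "Bh [] (x + y) = Bh [] x + Bh [] y" by (rule lin_add[OF nil_sub])
lemma A_scale: "Bh [] (a *\<^sub>C x) = a *\<^sub>C Bh [] x" by (rule lin_scale[OF nil_sub])
lemma A_zero: "Bh [] 0 = 0" by (rule lin_zero[OF nil_sub])
lemma A_minus: "Bh [] (- x) = - Bh [] x"
  using A_scale[of "-1" x] by (simp add: cscale_minus_one)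
lemma A_diff: "Bh [] (x - y) = Bh [] x - Bh [] y"
  using A_add[of x "- y"] by (simp add: A_minus)

lemma A_contr: "norm (Bh [] h) \<le> norm h"
proof -
  have x: "ev 0 h \<in> vecs 1 UNIV" by (auto simp: vecs_def ev_def)
  have "vn2 1 (Beval d 1 Bh (\<lambda>k i j. 0) (ev 0 h)) \<le> vn2 1 (ev 0 h)"
    by (rule contr[OF _ zero_rowball x]) simp
  moreover have "vn2 1 (Beval d 1 Bh (\<lambda>k i j. 0) (ev 0 h)) = (norm (Bh [] h))\<^sup>2"
    by (simp add: vn2_def Beval_zero ev_def)
  moreover have "vn2 1 (ev 0 h) = (norm h)\<^sup>2" by (simp add: vn2_ev)
  ultimately have "(norm (Bh [] h))\<^sup>2 \<le> (norm h)\<^sup>2" by simp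
  then show ?thesis by (simp add: power2_le_iff_abs_le)
qed

lemma A_bl: "bounded_linear (Bh [])"
proof (rule bounded_linear_intro[where K=1])
  show "Bh [] (x + y) = Bh [] x + Bh [] y" for x y by (rule A_add)
  show "Bh [] (r *\<^sub>R x) = r *\<^sub>R Bh [] x" for r x
    using A_scale[of "complex_of_real r" x] by (simp add: cscale_of_real)
  show "norm (Bh [] x) \<le> norm x * 1" for x using A_contr by simp
qed

definition Kset :: "'h set" where "Kset = {h. norm (Bh [] h) = norm h}"

lemma K_sub: "csubspace Kset"
  unfolding csubspace_def
proof (intro conjI ballI allI)
  show "0 \<in> Kset" by (simp add: Kset_def A_zero)
  fix x y assume x: "x \<in> Kset" and y: "y \<in> Kset"
  have p1: "(norm (Bh [] (x + y)))\<^sup>2 \<le> (norm (x + y))\<^sup>2" using A_contr by (simp add: power_mono)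
  have p2: "(norm (Bh [] (x - y)))\<^sup>2 \<le> (norm (x - y))\<^sup>2" using A_contr by (simp add: power_mono)
  have par1: "(norm (Bh [] (x + y)))\<^sup>2 + (norm (Bh [] (x - y)))\<^sup>2 = 2 * (norm (Bh [] x))\<^sup>2 + 2 * (norm (Bh [] y))\<^sup>2"
    by (simp add: A_add A_diff norm_add_sq norm_diff_sq)
  have par2: "(norm (x + y))\<^sup>2 + (norm (x - y))\<^sup>2 = 2 * (norm x)\<^sup>2 + 2 * (norm y)\<^sup>2"
    by (simp add: norm_add_sq norm_diff_sq)
  have nx: "norm (Bh [] x) = norm x" "norm (Bh [] y) = norm y" using x y by (simp_all add: Kset_def)
  have "(norm (Bh [] (x + y)))\<^sup>2 = (norm (x + y))\<^sup>2"
    using p1 p2 par1[unfolded nx] par2 by linarith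
  then have "norm (Bh [] (x + y)) = norm (x + y)" by (rule power2_eq_imp_eq) simp_all
  then show "x + y \<in> Kset" by (simp add: Kset_def)
next
  fix a x assume "x \<in> Kset"
  then show "a *\<^sub>C x \<in> Kset" by (simp add: Kset_def A_scale norm_cscale)
qed

lemma K_closed: "closed Kset"
proof -
  have "continuous_on UNIV (\<lambda>h. norm (Bh [] h))"
    by (intro continuous_on_norm bounded_linear.continuous_on[OF A_bl] continuous_on_id)
  moreover have "continuous_on UNIV (\<lambda>h::'h. norm h)" by (intro continuous_on_norm continuous_on_id)
  ultimately show ?thesis unfolding Kset_def by (rule closed_Collect_eq)
qed

definition JK :: "'j set" where "JK = Bh [] ` Kset"

lemma JK_sub: "csubspace JK"
  unfolding csubspace_def JK_def
proof (intro conjI ballI allI)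
  show "0 \<in> Bh [] ` Kset" using csub_zero[OF K_sub] A_zero by (metis imageI)
  fix x y assume "x \<in> Bh [] ` Kset" "y \<in> Bh [] ` Kset"
  then obtain a b where "a \<in> Kset" "b \<in> Kset" "x = Bh [] a" "y = Bh [] b" by blast
  then show "x + y \<in> Bh [] ` Kset" using csub_add[OF K_sub] A_add by (metis imageI)
next
  fix c x assume "x \<in> Bh [] ` Kset"
  then obtain a where "a \<in> Kset" "x = Bh [] a" by blast
  then show "c *\<^sub>C x \<in> Bh [] ` Kset" using csub_scale[OF K_sub] A_scale by (metis imageI)
qed

lemma JK_closed: "closed JK"
  unfolding closed_sequential_limits
proof (intro allI impI)
  fix y l assume a: "(\<forall>n. y n \<in> JK) \<and> y \<longlonglongrightarrow> l"
  then have "\<forall>n. \<exists>k. k \<in> Kset \<and> y n = Bh [] k" unfolding JK_def by blast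
  then obtain k where k: "\<And>n. k n \<in> Kset" "\<And>n. y n = Bh [] (k n)" by metis
  have "Cauchy y" using a LIMSEQ_imp_Cauchy by blast
  have dk: "dist (k m) (k p) = dist (y m) (y p)" for m p
  proof -
    have "k m - k p \<in> Kset" using csub_diff[OF K_sub k(1) k(1)] .
    then have "norm (Bh [] (k m - k p)) = norm (k m - k p)" by (simp add: Kset_def)
    then show ?thesis by (simp add: dist_norm k(2) A_diff)
  qed
  have "Cauchy k" using \<open>Cauchy y\<close> unfolding Cauchy_def dk .
  then obtain q where kq: "k \<longlonglongrightarrow> q" using Cauchy_convergent_iff convergent_def by blast
  have qK: "q \<in> Kset" using closed_sequentially[OF K_closed k(1) kq] .
  have "(\<lambda>n. Bh [] (k n)) \<longlonglongrightarrow> Bh [] q" by (rule bounded_linear.tendsto[OF A_bl kq])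
  moreover have "y = (\<lambda>n. Bh [] (k n))" using k(2) by (intro ext) simp
  ultimately have "y \<longlonglongrightarrow> Bh [] q" by simp
  then have "l = Bh [] q" using a LIMSEQ_unique by blast
  then show "l \<in> JK" using qK by (simp add: JK_def)
qed

definition H0 :: "'h set" where "H0 = ortho Kset"
definition J0 :: "'j set" where "J0 = ortho JK"

lemma H0_sub: "csubspace H0" unfolding H0_def by (rule csubspace_ortho[OF K_sub])
lemma J0_sub: "csubspace J0" unfolding J0_def by (rule csubspace_ortho[OF JK_sub])
lemma H0_closed: "closed H0" unfolding H0_def by (rule closed_ortho[OF K_sub])
lemma J0_closed: "closed J0" unfolding J0_def by (rule closed_ortho[OF JK_sub])
lemma ortho_H0: "ortho H0 = Kset" unfolding H0_def by (rule ortho_ortho[OF K_sub K_closed])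
lemma ortho_J0: "ortho J0 = JK" unfolding J0_def by (rule ortho_ortho[OF JK_sub JK_closed])

lemma Beval_zero_fun: "Beval d n Bh (\<lambda>k i j. 0) x = (\<lambda>i. if i < n then Bh [] (x i) else 0)"
  by (auto simp: Beval_zero Beval_outside intro!: ext)

lemma iso_K: "x \<in> vecs n Kset \<Longrightarrow> vn2 n (Beval d n Bh (\<lambda>k i j. 0) x) = vn2 n x"
  unfolding vn2_def Beval_zero_fun by (intro sum.cong refl) (auto simp: vecs_def Kset_def)

lemma F2:
  assumes n: "n > 0" and Z: "Z \<in> rowball d n" and x: "x \<in> vecs n Kset"
  shows "Beval d n Bh Z x = Beval d n Bh (\<lambda>k i j. 0) x"
proof -
  have r: "radius d n Z > 1" by (rule radius_gt1[OF Z])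
  have "Beval d n Bh (sc 1 Z) x = Beval d n Bh (sc 0 Z) x"
    by (rule core[OF n Z vecs_UNIV[OF x]]) (use r iso_K[OF x] in auto)
  then show ?thesis by simp
qed

lemma F4:
  assumes n: "n > 0" and Z: "Z \<in> rowball d n" and x: "x \<in> vecs n Kset"
  shows "Beval d n Bh Z x \<in> vecs n JK"
  unfolding F2[OF assms] Beval_zero_fun using x by (auto simp: vecs_def JK_def)

lemma F3:
  assumes n: "n > 0" and Z: "Z \<in> rowball d n" and x: "x \<in> vecs n H0"
  shows "Beval d n Bh Z x \<in> vecs n J0"
proof -
  have "Beval d n Bh Z x i \<in> J0" if i: "i < n" for i
  proof -
    have "inner y (Beval d n Bh Z x i) = 0" if y: "y \<in> JK" for y
    proof -
      obtain k where k: "k \<in> Kset" "y = Bh [] k" using y unfolding JK_def by blast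
      have e: "ev i k \<in> vecs n Kset" by (rule ev_vecs[OF i k(1) csub_zero[OF K_sub]])
      have Be: "Beval d n Bh Z (ev i k) = ev i (Bh [] k)"
        unfolding F2[OF n Z e] Beval_zero_fun by (auto simp: ev_def A_zero i intro!: ext)
      have "x i \<in> ortho Kset" using x i by (simp add: vecs_def H0_def)
      then have "inner k (x i) = 0" using k(1) ortho_real[OF K_sub] by blast
      then have xe: "vin n x (ev i k) = 0" by (simp add: vin_ev[OF i] inner_commute)
      have "vn2 n (Beval d n Bh Z (ev i k)) = vn2 n (ev i k)"
        unfolding F2[OF n Z e] by (rule iso_K[OF e])
      then have "vin n (Beval d n Bh Z x) (Beval d n Bh Z (ev i k)) = 0"
        by (intro ortho_lemma[OF n Z vecs_UNIV[OF x] vecs_UNIV[OF e] xe])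
      then show ?thesis unfolding Be vin_ev[OF i] k(2) by (simp add: inner_commute)
    qed
    then show ?thesis unfolding J0_def ortho_real[OF JK_sub] by blast
  qed
  then show ?thesis by (auto simp: vecs_def Beval_outside)
qed

lemma F6:
  assumes n: "n > 0" and Z: "Z \<in> rowball d n" and x: "x \<in> vecs n H0" and nz: "x \<noteq> (\<lambda>_. 0)"
  shows "vnorm n (Beval d n Bh Z x) < vnorm n x"
proof (rule ccontr)
  assume "\<not> ?thesis"
  then have "vn2 n (Beval d n Bh Z x) \<ge> vn2 n x" by (simp add: vnorm_less_iff)
  then have eq: "vn2 n (Beval d n Bh (sc 1 Z) x) = vn2 n x" using contr[OF n Z vecs_UNIV[OF x]] by simp
  have r: "radius d n Z > 1" by (rule radius_gt1[OF Z])
  have "Beval d n Bh (sc 0 Z) x = Beval d n Bh (sc 1 Z) x"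
    by (rule core[OF n Z vecs_UNIV[OF x]]) (use r eq in auto)
  then have "vn2 n (Beval d n Bh (\<lambda>k i j. 0) x) = vn2 n x" using eq by simp
  then have s: "(\<Sum>i<n. (norm (x i))\<^sup>2 - (norm (Bh [] (x i)))\<^sup>2) = 0"
    unfolding Beval_zero_fun vn2_def by (simp add: sum_subtractf)
  have "\<forall>i\<in>{..<n}. (norm (x i))\<^sup>2 - (norm (Bh [] (x i)))\<^sup>2 = 0"
    using s by (subst (asm) sum_nonneg_eq_0_iff) (auto intro: A_contr power_mono)
  then have "x i \<in> Kset" if "i < n" for i using that by (simp add: Kset_def)
  moreover have "x i \<in> ortho Kset" if "i < n" for i using x that by (simp add: vecs_def H0_def)
  ultimately have "x i = 0" if "i < n" for i using that ortho_inter_zero[OF K_sub] by blast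
  moreover have "x i = 0" if "\<not> i < n" for i using x that by (simp add: vecs_def)
  ultimately have "x = (\<lambda>_. 0)" by (intro ext) blast
  then show False using nz by simp
qed

lemma image_K:
  assumes n: "n > 0"
  shows "Beval d n Bh (\<lambda>k i j. 0) ` vecs n Kset = vecs n JK"
proof
  show "Beval d n Bh (\<lambda>k i j. 0) ` vecs n Kset \<subseteq> vecs n JK"
    using F4[OF n zero_rowball] by blast
  show "vecs n JK \<subseteq> Beval d n Bh (\<lambda>k i j. 0) ` vecs n Kset"
  proof
    fix y assume y: "y \<in> vecs n JK"
    have "\<forall>i. \<exists>k. i < n \<longrightarrow> k \<in> Kset \<and> y i = Bh [] k"
      using y unfolding vecs_def JK_def by blast
    then obtain k where k: "\<And>i. i < n \<Longrightarrow> k i \<in> Kset \<and> y i = Bh [] (k i)" by metis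
    define x where "x i = (if i < n then k i else 0)" for i
    have xv: "x \<in> vecs n Kset" using k by (auto simp: vecs_def x_def)
    have "Beval d n Bh (\<lambda>k i j. 0) x = y"
      unfolding Beval_zero_fun using k y by (auto simp: x_def vecs_def intro!: ext)
    then show "y \<in> Beval d n Bh (\<lambda>k i j. 0) ` vecs n Kset" using xv by blast
  qed
qed

end


definition Emat :: "nat list \<Rightarrow> nat \<Rightarrow> nat \<Rightarrow> nat \<Rightarrow> complex" where
  "Emat w k i j = (if j = Suc i \<and> i < length w \<and> w ! i = k then 1 else 0)"

lemma Zpow_E:
  assumes "i < Suc (length w)"
  shows "Zpow (Suc (length w)) (Emat w) u i j =
    (if j = i + length u \<and> i + length u \<le> length w \<and> (\<forall>p<length u. w ! (i + p) = u ! p) then 1 else 0)"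
  using assms
proof (induction u arbitrary: i)
  case Nil
  then show ?case by auto
next
  case (Cons k u)
  define m where "m = length w"
  have i: "i < Suc m" using Cons.prems by (simp add: m_def)
  have "Zpow (Suc m) (Emat w) (k # u) i j =
      (\<Sum>l<Suc m. Emat w k i l * Zpow (Suc m) (Emat w) u l j)"
    by (simp add: matmul_def m_def)
  also have "\<dots> = (\<Sum>l<Suc m. if l = Suc i then (if i < m \<and> w ! i = k then Zpow (Suc m) (Emat w) u l j else 0) else 0)"
    by (rule sum.cong) (auto simp: Emat_def m_def)
  also have "\<dots> = (if i < m \<and> w ! i = k then Zpow (Suc m) (Emat w) u (Suc i) j else 0)"
    using i by (auto simp: sum.delta')
  also have "\<dots> = (if j = i + length (k # u) \<and> i + length (k # u) \<le> m \<and>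
       (\<forall>p<length (k # u). w ! (i + p) = (k # u) ! p) then 1 else 0)"
  proof (cases "i < m \<and> w ! i = k")
    case True
    then have si: "Suc i < Suc (length w)" by (simp add: m_def)
    have eqv: "(\<forall>p<length (k # u). w ! (i + p) = (k # u) ! p) \<longleftrightarrow>
        w ! i = k \<and> (\<forall>p<length u. w ! (Suc i + p) = u ! p)"
      by (auto simp: less_Suc_eq_0_disj)
    show ?thesis using True unfolding Cons.IH[OF si] eqv m_def by auto
  next
    case False
    show ?thesis
    proof (cases "i < m")
      case True
      then have "w ! i \<noteq> k" using False by simp
      then have "\<not> (\<forall>p<length (k # u). w ! (i + p) = (k # u) ! p)" by force
      then show ?thesis using False by auto
    next
      case c: False
      then show ?thesis using False by auto
    qed
  qed
  finally show ?case by (simp add: m_def)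
qed

context schurB begin

lemma coef_J0:
  assumes w: "set w \<subseteq> {1..d}" and h: "h \<in> H0"
  shows "Bh w h \<in> J0"
proof -
  define m where "m = length w"
  define n where "n = Suc m"
  define E where "E = Emat w"
  define r where "r = rownorm d n E"
  define \<epsilon> :: real where "\<epsilon> = 1 / (r + 1)"
  have r0: "r \<ge> 0" unfolding r_def by (rule rownorm_nonneg)
  have e0: "\<epsilon> > 0" using r0 by (simp add: \<epsilon>_def)
  define Z where "Z = sc (complex_of_real \<epsilon>) E"
  have "rownorm d n Z \<le> cmod (complex_of_real \<epsilon>) * r" unfolding Z_def r_def by (rule rownorm_sc)
  also have "\<dots> = \<epsilon> * r" using e0 by simp
  also have "\<dots> < 1" using r0 by (simp add: \<epsilon>_def field_simps)
  finally have Z: "Z \<in> rowball d n" by (simp add: rowball_def)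
  have n: "n > 0" by (simp add: n_def)
  define x where "x = ev m h"
  have x: "x \<in> vecs n H0" unfolding x_def n_def by (rule ev_vecs) (use h csub_zero[OF H0_sub] in auto)
  have wm: "w \<in> words d m" using w by (simp add: words_def m_def)
  have ht: "hterm d n Bh Z x k 0 = (if k = m then (complex_of_real \<epsilon>) ^ m *\<^sub>C Bh w h else 0)" for k
  proof -
    have "hterm d n Bh Z x k 0 = (\<Sum>u\<in>words d k. Zpow n Z u 0 m *\<^sub>C Bh u h)"
      unfolding hterm_def
    proof (rule sum.cong[OF refl])
      fix u assume u: "u \<in> words d k"
      have "(\<Sum>j<n. Zpow n Z u 0 j *\<^sub>C Bh u (x j)) = (\<Sum>j<n. if j = m then Zpow n Z u 0 m *\<^sub>C Bh u h else 0)"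
        by (rule sum.cong) (auto simp: x_def ev_def lin_zero[OF words_sub[OF u]])
      also have "\<dots> = Zpow n Z u 0 m *\<^sub>C Bh u h" by (simp add: sum.delta' n_def)
      finally show "(\<Sum>j<n. Zpow n Z u 0 j *\<^sub>C Bh u (x j)) = Zpow n Z u 0 m *\<^sub>C Bh u h" .
    qed
    also have "\<dots> = (\<Sum>u\<in>words d k. if u = w \<and> k = m then (complex_of_real \<epsilon>) ^ m *\<^sub>C Bh w h else 0)"
    proof (rule sum.cong[OF refl])
      fix u assume u: "u \<in> words d k"
      have lu: "length u = k" using u by (simp add: words_def)
      have Zu: "Zpow n Z u 0 m = (complex_of_real \<epsilon>) ^ k * (if m = k \<and> (\<forall>p<k. w ! p = u ! p) then 1 else 0)"
        unfolding Z_def Zpow_sc E_def n_def m_def using Zpow_E[of 0 w u "length w"] lu by auto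
      have "(m = k \<and> (\<forall>p<k. w ! p = u ! p)) \<longleftrightarrow> (u = w \<and> k = m)"
        using lu by (auto simp: m_def intro: nth_equalityI)
      then show "Zpow n Z u 0 m *\<^sub>C Bh u h = (if u = w \<and> k = m then (complex_of_real \<epsilon>) ^ m *\<^sub>C Bh w h else 0)"
        unfolding Zu by auto
    qed
    also have "\<dots> = (if k = m then (complex_of_real \<epsilon>) ^ m *\<^sub>C Bh w h else 0)"
    proof (cases "k = m")
      case True
      then have "w \<in> words d k" using wm by simp
      then show ?thesis using True by (simp add: sum.delta' finite_words)
    next
      case False then show ?thesis by simp
    qed
    finally show ?thesis .
  qed
  have "(\<lambda>k. hterm d n Bh Z x k 0) sums ((complex_of_real \<epsilon>) ^ m *\<^sub>C Bh w h)"
    unfolding ht using sums_single[of m "\<lambda>_. (complex_of_real \<epsilon>) ^ m *\<^sub>C Bh w h"] by simp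
  then have B0: "Beval d n Bh Z x 0 = (complex_of_real \<epsilon>) ^ m *\<^sub>C Bh w h"
    by (simp add: Beval_def n_def sums_iff)
  have "Beval d n Bh Z x \<in> vecs n J0" by (rule F3[OF n Z x])
  then have "Beval d n Bh Z x 0 \<in> J0" using n by (simp add: vecs_def)
  then have "inverse ((complex_of_real \<epsilon>) ^ m) *\<^sub>C ((complex_of_real \<epsilon>) ^ m *\<^sub>C Bh w h) \<in> J0"
    unfolding B0 by (rule csub_scale[OF J0_sub])
  then show ?thesis using e0 by (simp add: cscale_cancel)
qed

end


context schurB begin

lemma vnorm1_ev: "vnorm 1 (ev 0 (h::'a::real_inner)) = norm h"
  using vn2_ev[of 0 1 h] by (simp add: vnorm_vn2)

lemma Beval0_ev: "Beval d 1 Bh (\<lambda>k i j. 0) (ev 0 h) = ev 0 (Bh [] h)"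
  unfolding Beval_zero_fun by (auto simp: ev_def intro!: ext)

lemma unique:
  assumes H: "csubspace H0'" "closed H0'" and J: "csubspace J0'" "closed J0'"
    and pc: "purely_contractive d H0' Bh"
    and iso: "\<forall>n>0. (\<forall>x\<in>vecs n (ortho H0'). vnorm n (Beval d n Bh (\<lambda>k i j. 0) x) = vnorm n x) \<and>
             Beval d n Bh (\<lambda>k i j. 0) ` vecs n (ortho H0') = vecs n (ortho J0')"
  shows "H0' = H0 \<and> J0' = J0"
proof -
  define Hp where "Hp = ortho H0'"
  define Jp where "Jp = ortho J0'"
  have Hp_sub: "csubspace Hp" unfolding Hp_def by (rule csubspace_ortho[OF H(1)])
  have Jp_sub: "csubspace Jp" unfolding Jp_def by (rule csubspace_ortho[OF J(1)])
  have iso1: "\<forall>x\<in>vecs 1 Hp. vnorm 1 (Beval d 1 Bh (\<lambda>k i j. 0) x) = vnorm 1 x"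
    using iso unfolding Hp_def by simp
  have img1: "Beval d 1 Bh (\<lambda>k i j. 0) ` vecs 1 Hp = vecs 1 Jp"
    using iso unfolding Hp_def Jp_def by simp
  have HpK: "Hp \<subseteq> Kset"
  proof
    fix h assume h: "h \<in> Hp"
    have "ev 0 h \<in> vecs 1 Hp" by (rule ev_vecs) (use h csub_zero[OF Hp_sub] in auto)
    then have "vnorm 1 (Beval d 1 Bh (\<lambda>k i j. 0) (ev 0 h)) = vnorm 1 (ev 0 h)" using iso1 by blast
    then show "h \<in> Kset" unfolding Beval0_ev vnorm1_ev by (simp add: Kset_def)
  qed
  have KHp: "Kset \<subseteq> Hp"
  proof
    fix k assume k: "k \<in> Kset"
    obtain p where p: "p \<in> H0'" "k - p \<in> ortho H0'" using proj_decomp[OF H] by blast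
    have "k - p \<in> Kset" using p(2) HpK by (auto simp: Hp_def)
    have "k - (k - p) \<in> Kset" using csub_diff[OF K_sub k \<open>k - p \<in> Kset\<close>] .
    then have pK: "p \<in> Kset" by simp
    have "p = 0"
    proof (rule ccontr)
      assume "p \<noteq> 0"
      then have nz: "ev 0 p \<noteq> (\<lambda>_. 0)" by (auto simp: ev_def fun_eq_iff)
      have "ev 0 p \<in> vecs 1 H0'" by (rule ev_vecs) (use p(1) csub_zero[OF H(1)] in auto)
      then have "vnorm 1 (Beval d 1 Bh (\<lambda>k i j. 0) (ev 0 p)) < vnorm 1 (ev 0 p)"
        using pc[unfolded purely_contractive_def, rule_format, of 1 "\<lambda>k i j. 0" "ev 0 p"] nz zero_rowball
        by simp
      then have "norm (Bh [] p) < norm p" unfolding Beval0_ev vnorm1_ev .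
      then show False using pK by (simp add: Kset_def)
    qed
    then show "k \<in> Hp" using p(2) by (simp add: Hp_def)
  qed
  have HpK': "Hp = Kset" using HpK KHp by blast
  have "H0' = ortho Hp" unfolding Hp_def by (rule ortho_ortho[OF H, symmetric])
  then have h0: "H0' = H0" by (simp add: HpK' H0_def)
  have "Jp = JK"
  proof
    show "Jp \<subseteq> JK"
    proof
      fix y assume y: "y \<in> Jp"
      have "ev 0 y \<in> vecs 1 Jp" by (rule ev_vecs) (use y csub_zero[OF Jp_sub] in auto)
      then obtain x where x: "x \<in> vecs 1 Hp" "ev 0 y = Beval d 1 Bh (\<lambda>k i j. 0) x"
        using img1 by blast
      have "ev 0 y 0 = Beval d 1 Bh (\<lambda>k i j. 0) x 0" using x(2) by simp
      then have "y = Beval d 1 Bh (\<lambda>k i j. 0) x 0" by (simp add: ev_def)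
      also have "\<dots> = Bh [] (x 0)" by (rule Beval_zero) simp
      finally have "y = Bh [] (x 0)" .
      moreover have "x 0 \<in> Kset" using x(1) HpK' by (simp add: vecs_def)
      ultimately show "y \<in> JK" by (simp add: JK_def)
    qed
    show "JK \<subseteq> Jp"
    proof
      fix y assume "y \<in> JK"
      then obtain k where k: "k \<in> Kset" "y = Bh [] k" by (auto simp: JK_def)
      have "ev 0 k \<in> vecs 1 Hp" by (rule ev_vecs) (use k HpK' csub_zero[OF K_sub] in auto)
      then have "Beval d 1 Bh (\<lambda>k i j. 0) (ev 0 k) \<in> vecs 1 Jp" using img1 by blast
      then have "ev 0 (Bh [] k) \<in> vecs 1 Jp" unfolding Beval0_ev .
      then show "y \<in> Jp" using k(2) by (simp add: vecs_def ev_def)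
    qed
  qed
  have "J0' = ortho Jp" unfolding Jp_def by (rule ortho_ortho[OF J, symmetric])
  then have j0: "J0' = J0" by (simp add: \<open>Jp = JK\<close> J0_def)
  show ?thesis using h0 j0 by simp
qed

lemma exist_props:
  "csubspace H0 \<and> closed H0 \<and> csubspace J0 \<and> closed J0 \<and>
      (\<forall>n>0. \<forall>Z\<in>rowball d n.
         Beval d n Bh Z ` vecs n H0 \<subseteq> vecs n J0 \<and>
         Beval d n Bh Z ` vecs n (ortho H0) \<subseteq> vecs n (ortho J0)) \<and>
      schur d H0 J0 Bh \<and> purely_contractive d H0 Bh \<and>
      (\<forall>n>0. \<forall>Z\<in>rowball d n. \<forall>x\<in>vecs n (ortho H0).
         Beval d n Bh Z x = Beval d n Bh (\<lambda>k i j. 0) x) \<and>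
      (\<forall>n>0. (\<forall>x\<in>vecs n (ortho H0). vnorm n (Beval d n Bh (\<lambda>k i j. 0) x) = vnorm n x) \<and>
             Beval d n Bh (\<lambda>k i j. 0) ` vecs n (ortho H0) = vecs n (ortho J0))"
  unfolding ortho_H0 ortho_J0
proof (intro conjI allI impI ballI)
  show "csubspace H0" by (rule H0_sub)
  show "closed H0" by (rule H0_closed)
  show "csubspace J0" by (rule J0_sub)
  show "closed J0" by (rule J0_closed)
  show "Beval d n Bh Z ` vecs n H0 \<subseteq> vecs n J0" if "n > 0" "Z \<in> rowball d n" for n Z
    using F3[OF that] by blast
  show "Beval d n Bh Z ` vecs n Kset \<subseteq> vecs n JK" if "n > 0" "Z \<in> rowball d n" for n Z
    using F4[OF that] by blast
  show "purely_contractive d H0 Bh"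
    unfolding purely_contractive_def by (intro allI impI ballI) (rule F6)
  show "Beval d n Bh Z x = Beval d n Bh (\<lambda>k i j. 0) x" if "n > 0" "Z \<in> rowball d n" "x \<in> vecs n Kset" for n Z x
    by (rule F2[OF that])
  show "vnorm n (Beval d n Bh (\<lambda>k i j. 0) x) = vnorm n x" if "n > 0" "x \<in> vecs n Kset" for n x
    unfolding vnorm_eq_iff by (rule iso_K[OF that(2)])
  show "Beval d n Bh (\<lambda>k i j. 0) ` vecs n Kset = vecs n JK" if "n > 0" for n
    by (rule image_K[OF that])
  show "schur d H0 J0 Bh"
    unfolding schur_def
  proof (intro conjI allI impI ballI)
    fix w :: "nat list" assume w: "set w \<subseteq> {1..d}"
    show "Bh w ` H0 \<subseteq> J0" using coef_J0[OF w] by blast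
    show "Bh w (x + y) = Bh w x + Bh w y" for x y by (rule lin_add[OF w])
    show "Bh w (a *\<^sub>C x) = a *\<^sub>C Bh w x" for a x by (rule lin_scale[OF w])
    obtain C where "\<forall>x. norm (Bh w x) \<le> C * norm x" using bound[OF w] by blast
    then show "\<exists>C. \<forall>x\<in>H0. norm (Bh w x) \<le> C * norm x" by blast
  next
    fix n :: nat and Z x i assume a: "n > 0" "Z \<in> rowball d n" "x \<in> vecs n H0"
    show "i < n \<Longrightarrow> summable (\<lambda>k. hterm d n Bh Z x k i)" by (rule summ[OF a(1,2) vecs_UNIV[OF a(3)]])
  next
    fix n :: nat and Z x assume a: "n > 0" "Z \<in> rowball d n" "x \<in> vecs n H0"
    show "vnorm n (Beval d n Bh Z x) \<le> vnorm n x"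
      unfolding vnorm_le_iff by (rule contr[OF a(1,2) vecs_UNIV[OF a(3)]])
  qed
qed

lemma exist_let: "let A = fst (H0, J0); B = snd (H0, J0); A' = ortho A; B' = ortho B in
      csubspace A \<and> closed A \<and> csubspace B \<and> closed B \<and>
      (\<forall>n>0. \<forall>Z\<in>rowball d n.
         Beval d n Bh Z ` vecs n A \<subseteq> vecs n B \<and>
         Beval d n Bh Z ` vecs n A' \<subseteq> vecs n B') \<and>
      schur d A B Bh \<and> purely_contractive d A Bh \<and>
      (\<forall>n>0. \<forall>Z\<in>rowball d n. \<forall>x\<in>vecs n A'.
         Beval d n Bh Z x = Beval d n Bh (\<lambda>k i j. 0) x) \<and>
      (\<forall>n>0. (\<forall>x\<in>vecs n A'. vnorm n (Beval d n Bh (\<lambda>k i j. 0) x) = vnorm n x) \<and>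
             Beval d n Bh (\<lambda>k i j. 0) ` vecs n A' = vecs n B')"
  unfolding Let_def fst_conv snd_conv by (rule exist_props)

lemma uniq_let:
  assumes P: "let A = fst HJ; B = snd HJ; A' = ortho A; B' = ortho B in
      csubspace A \<and> closed A \<and> csubspace B \<and> closed B \<and>
      (\<forall>n>0. \<forall>Z\<in>rowball d n.
         Beval d n Bh Z ` vecs n A \<subseteq> vecs n B \<and>
         Beval d n Bh Z ` vecs n A' \<subseteq> vecs n B') \<and>
      schur d A B Bh \<and> purely_contractive d A Bh \<and>
      (\<forall>n>0. \<forall>Z\<in>rowball d n. \<forall>x\<in>vecs n A'.
         Beval d n Bh Z x = Beval d n Bh (\<lambda>k i j. 0) x) \<and>
      (\<forall>n>0. (\<forall>x\<in>vecs n A'. vnorm n (Beval d n Bh (\<lambda>k i j. 0) x) = vnorm n x) \<and>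
             Beval d n Bh (\<lambda>k i j. 0) ` vecs n A' = vecs n B')"
  shows "HJ = (H0, J0)"
proof -
  have c: "csubspace (fst HJ)" "closed (fst HJ)" "csubspace (snd HJ)" "closed (snd HJ)"
      "purely_contractive d (fst HJ) Bh"
      "\<forall>n>0. (\<forall>x\<in>vecs n (ortho (fst HJ)). vnorm n (Beval d n Bh (\<lambda>k i j. 0) x) = vnorm n x) \<and>
             Beval d n Bh (\<lambda>k i j. 0) ` vecs n (ortho (fst HJ)) = vecs n (ortho (snd HJ))"
    using P unfolding Let_def by simp_all
  have "fst HJ = H0 \<and> snd HJ = J0" by (rule unique[OF c])
  then show "HJ = (H0, J0)" by (simp add: prod_eq_iff)
qed

end

theorem mainTheorem5:
  fixes d :: nat and Bh :: "nat list \<Rightarrow> 'h::chilbert \<Rightarrow> 'j::chilbert"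
  assumes "schur d (UNIV :: 'h set) (UNIV :: 'j set) Bh"
  shows "\<exists>!HJ :: 'h set \<times> 'j set.
    (let H0 = fst HJ; J0 = snd HJ; H' = ortho H0; J' = ortho J0 in
      csubspace H0 \<and> closed H0 \<and> csubspace J0 \<and> closed J0 \<and>
      (\<forall>n>0. \<forall>Z\<in>rowball d n.
         Beval d n Bh Z ` vecs n H0 \<subseteq> vecs n J0 \<and>
         Beval d n Bh Z ` vecs n H' \<subseteq> vecs n J') \<and>
      schur d H0 J0 Bh \<and> purely_contractive d H0 Bh \<and>
      (\<forall>n>0. \<forall>Z\<in>rowball d n. \<forall>x\<in>vecs n H'.
         Beval d n Bh Z x = Beval d n Bh (\<lambda>k i j. 0) x) \<and>
      (\<forall>n>0. (\<forall>x\<in>vecs n H'. vnorm n (Beval d n Bh (\<lambda>k i j. 0) x) = vnorm n x) \<and>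
             Beval d n Bh (\<lambda>k i j. 0) ` vecs n H' = vecs n J'))"
proof -
  interpret schurB d Bh by unfold_locales (rule assms)
  show ?thesis by (rule ex1I[of _ "(H0, J0)"], rule exist_let, rule uniq_let)
qed


end
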